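(* Let $\phi:R\to S$ be an epimorphism of commutative rings, where $S$ is a nonzero ring whose only idempotents are $0$ and $1$. Suppose $\phi(r)$ has a pointwise inverse in $S$ for every $r\in R$. Then $A=\mathrm{Im}(\phi)$ is an integral domain, and the ring map from the field of fractions of $A$ to $S$ extending the inclusion $A\subseteq S$ exists and is an isomorphism; in particular $S$ is a field isomorphic to the fraction field of $A$.
   Context: For $a,b$ in a commutative ring, $b$ is a pointwise inverse of $a$ if $a=a^2b$ and $b=b^2a$. Epimorphism means epimorphism in the category of commutative rings. *)

theory Defs
  imports "HOL-Algebra.Algebra"
begin

text \<open>HOL cannot quantify over all types inside a formula, so the
  test rings T range over all commutative rings whose carrier lives in the type of sets of
  pairs of elements of S.  This type is large enough to contain a copy of the tensor product
  of S with itself over R, which is the universal test object, so the notion coincides with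
  the categorical one.\<close>

definition ring_epi :: "('a, 'm) ring_scheme \<Rightarrow> ('b, 'n) ring_scheme \<Rightarrow> ('a \<Rightarrow> 'b) \<Rightarrow> bool" where
  "ring_epi R S f \<longleftrightarrow> f \<in> ring_hom R S \<and>
     (\<forall>(T :: ('b \<times> 'b) set ring) g h.
        cring T \<longrightarrow> g \<in> ring_hom S T \<longrightarrow> h \<in> ring_hom S T \<longrightarrow>
        (\<forall>r \<in> carrier R. g (f r) = h (f r)) \<longrightarrow> (\<forall>s \<in> carrier S. g s = h s))"

definition pointwise_inverse :: "('a, 'm) ring_scheme \<Rightarrow> 'a \<Rightarrow> 'a \<Rightarrow> bool" where
  "pointwise_inverse S a b \<longleftrightarrow> a \<in> carrier S \<and> b \<in> carrier S \<and>
     a = a \<otimes>\<^bsub>S\<^esub> a \<otimes>\<^bsub>S\<^esub> b \<and> b = b \<otimes>\<^bsub>S\<^esub> b \<otimes>\<^bsub>S\<^esub> a"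

definition frac_pairs :: "('a, 'm) ring_scheme \<Rightarrow> ('a \<times> 'a) set" where
  "frac_pairs D = carrier D \<times> (carrier D - {\<zero>\<^bsub>D\<^esub>})"

definition frac_rel :: "('a, 'm) ring_scheme \<Rightarrow> (('a \<times> 'a) \<times> ('a \<times> 'a)) set" where
  "frac_rel D = {((a, b), (c, d)). (a, b) \<in> frac_pairs D \<and> (c, d) \<in> frac_pairs D \<and>
                    a \<otimes>\<^bsub>D\<^esub> d = c \<otimes>\<^bsub>D\<^esub> b}"

definition frac_class :: "('a, 'm) ring_scheme \<Rightarrow> 'a \<times> 'a \<Rightarrow> ('a \<times> 'a) set" where
  "frac_class D p = frac_rel D `` {p}"

definition frac_mult :: "('a, 'm) ring_scheme \<Rightarrow> ('a \<times> 'a) set \<Rightarrow> ('a \<times> 'a) set \<Rightarrow> ('a \<times> 'a) set" where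
  "frac_mult D U V = \<Union>{frac_class D (fst p \<otimes>\<^bsub>D\<^esub> fst q, snd p \<otimes>\<^bsub>D\<^esub> snd q)
        | p q. p \<in> U \<and> q \<in> V}"

definition frac_add :: "('a, 'm) ring_scheme \<Rightarrow> ('a \<times> 'a) set \<Rightarrow> ('a \<times> 'a) set \<Rightarrow> ('a \<times> 'a) set" where
  "frac_add D U V = \<Union>{frac_class D (fst p \<otimes>\<^bsub>D\<^esub> snd q \<oplus>\<^bsub>D\<^esub> fst q \<otimes>\<^bsub>D\<^esub> snd p,
                      snd p \<otimes>\<^bsub>D\<^esub> snd q) | p q. p \<in> U \<and> q \<in> V}"

definition Frac :: "('a, 'm) ring_scheme \<Rightarrow> ('a \<times> 'a) set ring" where
  "Frac D = \<lparr> carrier = frac_pairs D // frac_rel D,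
     monoid.mult = frac_mult D,
     one = frac_class D (\<one>\<^bsub>D\<^esub>, \<one>\<^bsub>D\<^esub>),
     ring.zero = frac_class D (\<zero>\<^bsub>D\<^esub>, \<one>\<^bsub>D\<^esub>),
     ring.add = frac_add D \<rparr>"

end

theory Submission
  imports Defs
begin
lemma (in cring) finsum_swap:
  assumes "finite A" "finite C" "\<And>i j. i \<in> A \<Longrightarrow> j \<in> C \<Longrightarrow> f i j \<in> carrier R"
  shows "(\<Oplus>i\<in>A. \<Oplus>j\<in>C. f i j) = (\<Oplus>j\<in>C. \<Oplus>i\<in>A. f i j)"
  using assms
proof (induction A rule: finite_induct)
  case empty
  then show ?case by (simp add: finsum_zero)
next
  case (insert a A)
  have "(\<Oplus>i\<in>insert a A. \<Oplus>j\<in>C. f i j) = (\<Oplus>j\<in>C. f a j) \<oplus> (\<Oplus>i\<in>A. \<Oplus>j\<in>C. f i j)"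
    using insert by (subst finsum_insert) (auto intro!: finsum_closed)
  also have "\<dots> = (\<Oplus>j\<in>C. f a j) \<oplus> (\<Oplus>j\<in>C. \<Oplus>i\<in>A. f i j)"
    using insert by simp
  also have "\<dots> = (\<Oplus>j\<in>C. f a j \<oplus> (\<Oplus>i\<in>A. f i j))"
    using insert by (subst finsum_addf) (auto intro!: finsum_closed)
  also have "\<dots> = (\<Oplus>j\<in>C. \<Oplus>i\<in>insert a A. f i j)"
    using insert by (intro finsum_cong') (auto simp: finsum_insert)
  finally show ?case .
qed

locale sf = cring R + subfield K R for K and R (structure)
begin

lemma K_sub: "K \<subseteq> carrier R"
  using subfieldE(3)[OF subfield_axioms] .

lemma K_closed:
  "\<zero> \<in> K" "\<one> \<in> K" "\<And>a b. a \<in> K \<Longrightarrow> b \<in> K \<Longrightarrow> a \<otimes> b \<in> K"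
  "\<And>a b. a \<in> K \<Longrightarrow> b \<in> K \<Longrightarrow> a \<oplus> b \<in> K" "\<And>a. a \<in> K \<Longrightarrow> \<ominus> a \<in> K"
  using subringE[OF subfieldE(1)[OF subfield_axioms]] by auto

lemma K_inv: "k \<in> K \<Longrightarrow> k \<noteq> \<zero> \<Longrightarrow> inv k \<in> K \<and> inv k \<otimes> k = \<one>"
  using subfield_m_inv[OF subfield_axioms, of k] by auto

lemma K_car: "k \<in> K \<Longrightarrow> k \<in> carrier R"
  using K_sub by auto

definition lind :: "'a set \<Rightarrow> bool" where
  "lind W \<longleftrightarrow> W \<subseteq> carrier R \<and> (\<forall>F c. finite F \<longrightarrow> F \<subseteq> W \<longrightarrow> c \<in> F \<rightarrow> K \<longrightarrow>
      (\<Oplus>x\<in>F. c x \<otimes> x) = \<zero> \<longrightarrow> (\<forall>x\<in>F. c x = \<zero>))"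

definition lspn :: "'a set \<Rightarrow> 'a set" where
  "lspn W = {y. \<exists>F c. finite F \<and> F \<subseteq> W \<and> c \<in> F \<rightarrow> K \<and> y = (\<Oplus>x\<in>F. c x \<otimes> x)}"

lemma in_lspn: "W \<subseteq> carrier R \<Longrightarrow> x \<in> W \<Longrightarrow> x \<in> lspn W"
  unfolding lspn_def
  by (rule CollectI, rule exI[of _ "{x}"], rule exI[of _ "\<lambda>_. \<one>"]) (auto simp: K_closed)

lemma lind_one: "lind {\<one>}"
  unfolding lind_def
proof (intro conjI allI impI ballI)
  fix F c x assume F: "finite F" "F \<subseteq> {\<one>}" "c \<in> F \<rightarrow> K" "(\<Oplus>x\<in>F. c x \<otimes> x) = \<zero>" "x \<in> F"
  then have "F = {\<one>}" "x = \<one>" by auto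
  with F show "c x = \<zero>" using K_car by auto
qed auto

lemma lind_insert:
  assumes M: "lind M" and y: "y \<in> carrier R" "y \<notin> lspn M"
  shows "lind (insert y M)"
proof -
  have Mc: "M \<subseteq> carrier R" using M lind_def by auto
  have yM: "y \<notin> M" using y in_lspn[OF Mc] by auto
  show ?thesis unfolding lind_def
  proof (intro conjI allI impI)
    show "insert y M \<subseteq> carrier R" using Mc y by auto
  next
    fix F c assume F: "finite F" "F \<subseteq> insert y M" "c \<in> F \<rightarrow> K" "(\<Oplus>x\<in>F. c x \<otimes> x) = \<zero>"
    have cc: "\<And>x. x \<in> F \<Longrightarrow> c x \<in> carrier R" using F(3) K_sub by (auto simp: Pi_def)
    have Fc: "F \<subseteq> carrier R" using F(2) Mc y by auto
    show "\<forall>x\<in>F. c x = \<zero>"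
    proof (cases "y \<in> F")
      case False
      then have "F \<subseteq> M" using F by auto
      then show ?thesis using M F unfolding lind_def by blast
    next
      case True
      define F' where "F' = F - {y}"
      have F'M: "F' \<subseteq> M" "finite F'" "y \<notin> F'" using F F'_def by auto
      have FF: "F = insert y F'" using True F'_def by auto
      define s where "s = (\<Oplus>x\<in>F'. c x \<otimes> x)"
      have sc: "s \<in> carrier R" unfolding s_def using F'M Fc cc FF
        by (intro finsum_closed) auto
      have eq: "c y \<otimes> y \<oplus> s = \<zero>"
        using F(4) unfolding FF s_def using F'M Fc cc FF
        by (subst (asm) finsum_insert) auto
      have cy0: "c y = \<zero>"
      proof (rule ccontr)
        assume ne: "c y \<noteq> \<zero>"
        have cyK: "c y \<in> K" using F(3) True by auto
        obtain k where k: "k \<in> K" "k \<otimes> c y = \<one>" using K_inv[OF cyK ne] by blast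
        have kc: "k \<in> carrier R" "c y \<in> carrier R" using k cyK K_car by auto
        have "y = (\<ominus> k) \<otimes> s"
        proof -
          have "k \<otimes> (c y \<otimes> y \<oplus> s) = \<zero>" using eq kc by simp
          then have "k \<otimes> c y \<otimes> y \<oplus> k \<otimes> s = \<zero>" using kc sc y
            by (simp add: r_distr m_assoc)
          then have "y \<oplus> k \<otimes> s = \<zero>" using k(2) y by simp
          then show ?thesis using kc sc y
            using minus_equality[of y "k \<otimes> s"] l_minus[of k s] by simp
        qed
        also have "\<dots> = (\<Oplus>x\<in>F'. ((\<ominus> k) \<otimes> c x) \<otimes> x)"
          unfolding s_def using F'M Fc cc FF kc
          by (subst finsum_rdistr) (auto intro!: finsum_cong' simp: m_assoc)
        finally have "y \<in> lspn M" unfolding lspn_def using F'M F(3) FF k(1)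
          by (intro CollectI exI[of _ F'] exI[of _ "\<lambda>x. (\<ominus> k) \<otimes> c x"]) (auto intro!: K_closed)
        then show False using y by auto
      qed
      then have "s = \<zero>" using eq sc y by simp
      then have "\<forall>x\<in>F'. c x = \<zero>" using M F'M F(3) FF unfolding lind_def s_def by auto
      then show ?thesis using cy0 FF by auto
    qed
  qed
qed

lemma exists_basis: "\<exists>B. \<one> \<in> B \<and> lind B \<and> carrier R \<subseteq> lspn B"
proof -
  let ?A = "{W. \<one> \<in> W \<and> lind W}"
  have "\<exists>M\<in>?A. \<forall>W\<in>?A. M \<subseteq> W \<longrightarrow> W = M"
  proof (rule subset_Zorn)
    fix C assume ch: "subset.chain ?A C"
    show "\<exists>U\<in>?A. \<forall>W\<in>C. W \<subseteq> U"
    proof (cases "C = {}")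
      case True then show ?thesis using lind_one by auto
    next
      case False
      have CA: "C \<subseteq> ?A" using ch by (auto simp: subset_chain_def)
      have "lind (\<Union>C)" unfolding lind_def
      proof (intro conjI allI impI)
        show "\<Union>C \<subseteq> carrier R" using CA by (auto simp: lind_def)
      next
        fix F c assume F: "finite F" "F \<subseteq> \<Union>C" "c \<in> F \<rightarrow> K" "(\<Oplus>x\<in>F. c x \<otimes> x) = \<zero>"
        obtain W where W: "W \<in> C" "F \<subseteq> W"
          using finite_subset_Union_chain[OF F(1) F(2) False ch] by blast
        then have "lind W" using CA by auto
        then show "\<forall>x\<in>F. c x = \<zero>" using W F unfolding lind_def by blast
      qed
      moreover have "\<one> \<in> \<Union>C" using False CA by auto
      ultimately show ?thesis by auto
    qed
  qed
  then obtain M where M: "\<one> \<in> M" "lind M" and max: "\<forall>W\<in>?A. M \<subseteq> W \<longrightarrow> W = M" by blast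
  have "carrier R \<subseteq> lspn M"
  proof
    fix y assume y: "y \<in> carrier R"
    show "y \<in> lspn M"
    proof (rule ccontr)
      assume "y \<notin> lspn M"
      then have "lind (insert y M)" using lind_insert M y by auto
      then have "insert y M = M" using max M by auto
      then have "y \<in> M" by auto
      then show False using \<open>y \<notin> lspn M\<close> in_lspn M(2) lind_def by auto
    qed
  qed
  then show ?thesis using M by auto
qed

end

locale bas = sf + fixes B assumes B1: "\<one> \<in> B" and Bi: "lind B" and Bs: "carrier R \<subseteq> lspn B"
begin

lemma Bc: "B \<subseteq> carrier R" using Bi lind_def by auto

definition supp :: "('a \<Rightarrow> 'a) \<Rightarrow> 'a set" where "supp c = {x. c x \<noteq> \<zero>}"

definition rep :: "'a \<Rightarrow> ('a \<Rightarrow> 'a) \<Rightarrow> bool" where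
  "rep y c \<longleftrightarrow> (\<forall>x. c x \<in> K) \<and> (\<forall>x. x \<notin> B \<longrightarrow> c x = \<zero>) \<and> finite (supp c) \<and>
     y = (\<Oplus>x\<in>supp c. c x \<otimes> x)"

definition crd :: "'a \<Rightarrow> 'a \<Rightarrow> 'a" where "crd y = (THE c. rep y c)"

lemma supp_B: "(\<forall>x. x \<notin> B \<longrightarrow> c x = \<zero>) \<Longrightarrow> supp c \<subseteq> B"
  unfolding supp_def by auto

lemma sum_sup:
  assumes "\<forall>x. c x \<in> carrier R" "finite G" "supp c \<subseteq> G" "G \<subseteq> carrier R"
  shows "(\<Oplus>x\<in>G. c x \<otimes> x) = (\<Oplus>x\<in>supp c. c x \<otimes> x)"
  using assms by (intro add.finprod_mono_neutral_cong_right) (auto simp: supp_def)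

lemma rep_unique:
  assumes c: "rep y c" and d: "rep y d" shows "c = d"
proof -
  let ?G = "supp c \<union> supp d"
  have G: "finite ?G" "?G \<subseteq> B" using c d supp_B unfolding rep_def by auto
  have Gc: "?G \<subseteq> carrier R" using G Bc by auto
  have cK: "\<And>x. c x \<in> carrier R" "\<And>x. d x \<in> carrier R" using c d K_sub unfolding rep_def by auto
  have yc: "y = (\<Oplus>x\<in>?G. c x \<otimes> x)" using c sum_sup[of c ?G] G Gc cK unfolding rep_def by auto
  have yd: "y = (\<Oplus>x\<in>?G. d x \<otimes> x)" using d sum_sup[of d ?G] G Gc cK unfolding rep_def by auto
  have ycar: "y \<in> carrier R" using yc Gc cK by (auto intro!: finsum_closed)
  define e where "e x = c x \<oplus> \<ominus> d x" for x
  have ec: "\<And>x. e x \<in> carrier R" using cK unfolding e_def by auto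
  have "(\<Oplus>x\<in>?G. e x \<otimes> x) \<oplus> y = (\<Oplus>x\<in>?G. e x \<otimes> x \<oplus> d x \<otimes> x)"
    unfolding yd using G Gc ec cK by (subst finsum_addf) auto
  also have "\<dots> = (\<Oplus>x\<in>?G. c x \<otimes> x)"
  proof (intro finsum_cong')
    fix x assume "x \<in> ?G"
    then have xc: "x \<in> carrier R" using Gc by auto
    show "e x \<otimes> x \<oplus> d x \<otimes> x = c x \<otimes> x" unfolding e_def using xc cK[of x] by algebra
  qed (use Gc cK in auto)
  also have "\<dots> = y" using yc by simp
  finally have "(\<Oplus>x\<in>?G. e x \<otimes> x) = \<zero>" using ycar Gc ec
    by (subst (asm) add.r_cancel_one) (auto intro!: finsum_closed)
  moreover have "e \<in> ?G \<rightarrow> K" using c d unfolding rep_def e_def by (auto intro!: K_closed)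
  ultimately have "\<forall>x\<in>?G. e x = \<zero>" using Bi G unfolding lind_def by blast
  then have "\<forall>x\<in>?G. c x = d x"
  proof (intro ballI)
    fix x assume "\<forall>x\<in>?G. e x = \<zero>" "x \<in> ?G"
    then have "c x \<oplus> \<ominus> d x = \<zero>" unfolding e_def by auto
    then have "c x = \<ominus> (\<ominus> d x)" using sum_zero_eq_neg[of "c x" "\<ominus> d x"] cK by auto
    then show "c x = d x" using cK by simp
  qed
  then show ?thesis
  proof (intro ext)
    fix x assume H: "\<forall>x\<in>?G. c x = d x"
    show "c x = d x"
    proof (cases "x \<in> ?G")
      case True then show ?thesis using H by blast
    next
      case False then show ?thesis unfolding supp_def by simp
    qed
  qed
qed

lemma rep_I:
  assumes "\<forall>x. c x \<in> K" "\<forall>x. x \<notin> B \<longrightarrow> c x = \<zero>" "finite G" "G \<subseteq> B" "supp c \<subseteq> G"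
    "y = (\<Oplus>x\<in>G. c x \<otimes> x)"
  shows "rep y c"
proof -
  have "finite (supp c)" by (rule finite_subset[OF assms(5) assms(3)])
  moreover have "y = (\<Oplus>x\<in>supp c. c x \<otimes> x)"
    using assms sum_sup[of c G] Bc K_sub by auto
  ultimately show ?thesis using assms unfolding rep_def by auto
qed

lemma rep_ex: assumes "y \<in> carrier R" shows "\<exists>c. rep y c"
proof -
  obtain F c where F: "finite F" "F \<subseteq> B" "c \<in> F \<rightarrow> K" "y = (\<Oplus>x\<in>F. c x \<otimes> x)"
    using Bs assms unfolding lspn_def by blast
  define c' where "c' x = (if x \<in> F then c x else \<zero>)" for x
  have cF: "\<forall>x\<in>F. c x \<in> carrier R" using F(3) K_sub by (auto simp: Pi_def)
  have "y = (\<Oplus>x\<in>F. c' x \<otimes> x)" using F Bc cF unfolding c'_def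
    by (auto intro!: finsum_cong')
  then have "rep y c'" using F
    by (intro rep_I[of c' F]) (auto simp: c'_def supp_def K_closed)
  then show ?thesis by blast
qed

lemma crd_rep: assumes "y \<in> carrier R" shows "rep y (crd y)"
proof -
  obtain c where c: "rep y c" using rep_ex[OF assms] by blast
  show ?thesis unfolding crd_def by (rule theI[of "rep y" c]) (use c rep_unique in auto)
qed

lemma crd_eq: assumes "rep y c" shows "crd y = c"
  unfolding crd_def by (rule the_equality) (use assms rep_unique in auto)

lemma crd_K: "y \<in> carrier R \<Longrightarrow> crd y x \<in> K"
  using crd_rep rep_def by blast

lemma crd_car: "y \<in> carrier R \<Longrightarrow> crd y x \<in> carrier R"
  using crd_K K_sub by blast

lemma crd_out: "y \<in> carrier R \<Longrightarrow> x \<notin> B \<Longrightarrow> crd y x = \<zero>"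
  using crd_rep rep_def by blast

lemma crd_fin: "y \<in> carrier R \<Longrightarrow> finite (supp (crd y))"
  using crd_rep rep_def by blast

lemma crd_suppB: "y \<in> carrier R \<Longrightarrow> supp (crd y) \<subseteq> B"
  using crd_out supp_B by blast

lemma crd_sum: assumes "y \<in> carrier R" "finite G" "supp (crd y) \<subseteq> G" "G \<subseteq> carrier R"
  shows "(\<Oplus>x\<in>G. crd y x \<otimes> x) = y"
proof -
  have e1: "y = (\<Oplus>x\<in>supp (crd y). crd y x \<otimes> x)" using crd_rep[OF assms(1)] unfolding rep_def by blast
  have e2: "(\<Oplus>x\<in>G. crd y x \<otimes> x) = (\<Oplus>x\<in>supp (crd y). crd y x \<otimes> x)"
    by (rule sum_sup) (use assms crd_car in auto)
  show ?thesis using trans[OF e2 e1[symmetric]] .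
qed

lemma crd_add: assumes "y \<in> carrier R" "z \<in> carrier R"
  shows "crd (y \<oplus> z) = (\<lambda>x. crd y x \<oplus> crd z x)"
proof (rule crd_eq, rule rep_I)
  let ?G = "supp (crd y) \<union> supp (crd z)"
  show "finite ?G" "?G \<subseteq> B" using assms crd_fin crd_suppB by auto
  show "\<forall>x. crd y x \<oplus> crd z x \<in> K" using assms crd_K K_closed by auto
  show "\<forall>x. x \<notin> B \<longrightarrow> crd y x \<oplus> crd z x = \<zero>" using assms crd_out by auto
  show "supp (\<lambda>x. crd y x \<oplus> crd z x) \<subseteq> ?G" by (auto simp: supp_def)
  have Gc: "?G \<subseteq> carrier R" using \<open>?G \<subseteq> B\<close> Bc by auto
  have "y \<oplus> z = (\<Oplus>x\<in>?G. crd y x \<otimes> x) \<oplus> (\<Oplus>x\<in>?G. crd z x \<otimes> x)"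
    using crd_sum[of y ?G] crd_sum[of z ?G] assms \<open>finite ?G\<close> Gc by simp
  also have "\<dots> = (\<Oplus>x\<in>?G. (crd y x \<oplus> crd z x) \<otimes> x)"
    using Gc assms crd_car \<open>finite ?G\<close>
    by (subst finsum_addf[symmetric]) (auto intro!: finsum_cong' simp: l_distr)
  finally show "y \<oplus> z = (\<Oplus>x\<in>?G. (crd y x \<oplus> crd z x) \<otimes> x)" .
qed

lemma crd_smul: assumes "k \<in> K" "y \<in> carrier R"
  shows "crd (k \<otimes> y) = (\<lambda>x. k \<otimes> crd y x)"
proof (rule crd_eq, rule rep_I)
  let ?G = "supp (crd y)"
  show "finite ?G" "?G \<subseteq> B" using assms crd_fin crd_suppB by auto
  show "\<forall>x. k \<otimes> crd y x \<in> K" using assms crd_K K_closed by auto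
  show "\<forall>x. x \<notin> B \<longrightarrow> k \<otimes> crd y x = \<zero>" using assms crd_out K_sub by auto
  show "supp (\<lambda>x. k \<otimes> crd y x) \<subseteq> ?G" using assms K_sub by (auto simp: supp_def)
  have Gc: "?G \<subseteq> carrier R" using \<open>?G \<subseteq> B\<close> Bc by auto
  have kc: "k \<in> carrier R" using assms K_sub by auto
  have "k \<otimes> y = k \<otimes> (\<Oplus>x\<in>?G. crd y x \<otimes> x)"
    using crd_sum[of y ?G] assms \<open>finite ?G\<close> Gc by simp
  also have "\<dots> = (\<Oplus>x\<in>?G. (k \<otimes> crd y x) \<otimes> x)"
    using Gc assms crd_car \<open>finite ?G\<close> kc
    by (subst finsum_rdistr) (auto intro!: finsum_cong' simp: m_assoc)
  finally show "k \<otimes> y = (\<Oplus>x\<in>?G. (k \<otimes> crd y x) \<otimes> x)" .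
qed

lemma crd_basis: assumes "b \<in> B" shows "crd b = (\<lambda>x. if x = b then \<one> else \<zero>)"
proof (rule crd_eq, rule rep_I[where G="{b}"])
  show "b = (\<Oplus>x\<in>{b}. (if x = b then \<one> else \<zero>) \<otimes> x)" using assms Bc by auto
qed (use assms K_closed in \<open>auto simp: supp_def\<close>)

lemma crd_Kel: assumes "k \<in> K" shows "crd k = (\<lambda>x. if x = \<one> then k else \<zero>)"
proof -
  have "crd (k \<otimes> \<one>) = (\<lambda>x. k \<otimes> crd \<one> x)" using crd_smul[OF assms, of \<one>] by simp
  moreover have "k \<otimes> \<one> = k" using assms K_sub by auto
  ultimately have "crd k = (\<lambda>x. k \<otimes> crd \<one> x)" by simp
  then show ?thesis using assms K_sub crd_basis[OF B1] by (auto simp: fun_eq_iff)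
qed

lemma crd_zero: "crd \<zero> = (\<lambda>x. \<zero>)"
  using crd_Kel[OF K_closed(1)] by auto

lemma crd_lin_sum:
  assumes "finite I" "\<And>i. i \<in> I \<Longrightarrow> k i \<in> K" "\<And>i. i \<in> I \<Longrightarrow> f i \<in> carrier R"
  shows "crd (\<Oplus>i\<in>I. k i \<otimes> f i) d = (\<Oplus>i\<in>I. k i \<otimes> crd (f i) d)"
  using assms
proof (induction I rule: finite_induct)
  case empty then show ?case by (simp add: crd_zero)
next
  case (insert a I)
  have kc: "\<And>i. i \<in> insert a I \<Longrightarrow> k i \<in> carrier R" using insert K_sub by auto
  have "crd (\<Oplus>i\<in>insert a I. k i \<otimes> f i) d = crd (k a \<otimes> f a \<oplus> (\<Oplus>i\<in>I. k i \<otimes> f i)) d"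
    using insert kc by (subst finsum_insert) auto
  also have "\<dots> = k a \<otimes> crd (f a) d \<oplus> crd (\<Oplus>i\<in>I. k i \<otimes> f i) d"
    using insert kc by (subst crd_add) (auto intro!: finsum_closed simp: crd_smul)
  also have "\<dots> = (\<Oplus>i\<in>insert a I. k i \<otimes> crd (f i) d)"
    using insert kc crd_car by (subst finsum_insert) auto
  finally show ?case .
qed

end

context bas
begin

lemma fz: "(\<And>x. x \<in> A \<Longrightarrow> f x = \<zero>) \<Longrightarrow> finsum R f A = \<zero>"
  by (rule add.finprod_one_eqI) auto

definition Tc :: "('a \<Rightarrow> 'a) set" where
  "Tc = {u. (\<forall>x. u x \<in> carrier R) \<and> (\<forall>x. x \<notin> B \<longrightarrow> u x = \<zero>) \<and> finite (supp u)}"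

definition tm :: "('a \<Rightarrow> 'a) \<Rightarrow> ('a \<Rightarrow> 'a) \<Rightarrow> 'a \<Rightarrow> 'a" where
  "tm u v = (\<lambda>d. \<Oplus>b\<in>supp u. \<Oplus>c\<in>supp v. u b \<otimes> v c \<otimes> crd (b \<otimes> c) d)"

definition e1 :: "'a \<Rightarrow> 'a" where "e1 = (\<lambda>x. if x = \<one> then \<one> else \<zero>)"

definition T0 :: "('a \<Rightarrow> 'a) ring" where
  "T0 = \<lparr>carrier = Tc, monoid.mult = tm, one = e1, ring.zero = (\<lambda>x. \<zero>),
         ring.add = (\<lambda>u v x. u x \<oplus> v x)\<rparr>"

lemma T0_simps [simp]: "carrier T0 = Tc" "monoid.mult T0 = tm" "one T0 = e1"
  "ring.zero T0 = (\<lambda>x. \<zero>)" "ring.add T0 = (\<lambda>u v x. u x \<oplus> v x)"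
  by (simp_all add: T0_def)

lemma Tc_car: "u \<in> Tc \<Longrightarrow> u x \<in> carrier R" by (simp add: Tc_def)
lemma Tc_out: "u \<in> Tc \<Longrightarrow> x \<notin> B \<Longrightarrow> u x = \<zero>" by (simp add: Tc_def)
lemma Tc_fin: "u \<in> Tc \<Longrightarrow> finite (supp u)" by (simp add: Tc_def)
lemma Tc_suppB: "u \<in> Tc \<Longrightarrow> supp u \<subseteq> B" using Tc_out by (auto simp: supp_def)
lemma Tc_suppc: "u \<in> Tc \<Longrightarrow> supp u \<subseteq> carrier R" using Tc_suppB Bc by auto
lemma not_supp: "x \<notin> supp u \<Longrightarrow> u x = \<zero>" by (simp add: supp_def)

lemma crd_Tc: "y \<in> carrier R \<Longrightarrow> crd y \<in> Tc"
  unfolding Tc_def using crd_car crd_out crd_fin by auto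

lemma one_ne_zero: "\<one> \<noteq> \<zero>" using subfieldE(6)[OF subfield_axioms] .

lemma e1_Tc: "e1 \<in> Tc" unfolding Tc_def e1_def using B1
  by (auto simp: supp_def intro: finite_subset[of _ "{\<one>}"])

lemma supp_e1: "supp e1 = {\<one>}" using one_ne_zero by (auto simp: supp_def e1_def)

lemma fsum_single: "f a \<in> carrier R \<Longrightarrow> finsum R f {a} = f a"
  by (subst finsum_insert) auto

lemma supp_c: "u \<in> Tc \<Longrightarrow> x \<in> supp u \<Longrightarrow> x \<in> carrier R"
  using Tc_suppc by auto

lemma tm_sup:
  assumes u: "u \<in> Tc" and v: "v \<in> Tc" and F: "finite F" "supp u \<subseteq> F" "F \<subseteq> carrier R"
    and G: "finite G" "supp v \<subseteq> G" "G \<subseteq> carrier R"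
  shows "tm u v d = (\<Oplus>b\<in>F. \<Oplus>c\<in>G. u b \<otimes> v c \<otimes> crd (b \<otimes> c) d)"
proof -
  note uc = Tc_car[OF u] and vc = Tc_car[OF v] and su = supp_c[OF u] and sv = supp_c[OF v]
  note fu = Tc_fin[OF u] and fv = Tc_fin[OF v]
  have inner: "(\<Oplus>c\<in>G. u b \<otimes> v c \<otimes> crd (b \<otimes> c) d) = (\<Oplus>c\<in>supp v. u b \<otimes> v c \<otimes> crd (b \<otimes> c) d)"
    if b: "b \<in> carrier R" for b
    using G b uc vc crd_car
    by (intro add.finprod_mono_neutral_cong_right) (auto simp: supp_def)
  have "(\<Oplus>b\<in>F. \<Oplus>c\<in>G. u b \<otimes> v c \<otimes> crd (b \<otimes> c) d) = (\<Oplus>b\<in>F. \<Oplus>c\<in>supp v. u b \<otimes> v c \<otimes> crd (b \<otimes> c) d)"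
    using inner F uc vc crd_car fv by (rule_tac finsum_cong') (auto intro!: finsum_closed simp: sv)
  also have "\<dots> = (\<Oplus>b\<in>supp u. \<Oplus>c\<in>supp v. u b \<otimes> v c \<otimes> crd (b \<otimes> c) d)"
  proof (rule add.finprod_mono_neutral_cong_right)
    show "\<And>i. i \<in> F - supp u \<Longrightarrow> (\<Oplus>c\<in>supp v. u i \<otimes> v c \<otimes> crd (i \<otimes> c) d) = \<zero>"
      using F vc crd_car by (intro fz) (auto simp: supp_def simp: sv)
  qed (use F uc vc crd_car fv in \<open>auto intro!: finsum_closed simp: sv\<close>)
  finally show ?thesis unfolding tm_def by simp
qed

lemma tm_car: assumes u: "u \<in> Tc" and v: "v \<in> Tc" shows "tm u v d \<in> carrier R"
  unfolding tm_def using Tc_car[OF u] Tc_car[OF v] crd_car Tc_fin[OF u] Tc_fin[OF v]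
  by (auto intro!: finsum_closed simp: supp_c[OF u] supp_c[OF v])

lemma tm_out: assumes u: "u \<in> Tc" and v: "v \<in> Tc" and d: "d \<notin> B" shows "tm u v d = \<zero>"
  unfolding tm_def using Tc_car[OF u] Tc_car[OF v] crd_out d
  by (intro fz) (auto simp: supp_c[OF u] supp_c[OF v])

lemma tm_supp_sub: assumes u: "u \<in> Tc" and v: "v \<in> Tc"
  shows "supp (tm u v) \<subseteq> (\<Union>b\<in>supp u. \<Union>c\<in>supp v. supp (crd (b \<otimes> c)))"
proof
  fix d assume d: "d \<in> supp (tm u v)"
  show "d \<in> (\<Union>b\<in>supp u. \<Union>c\<in>supp v. supp (crd (b \<otimes> c)))"
  proof (rule ccontr)
    assume "d \<notin> (\<Union>b\<in>supp u. \<Union>c\<in>supp v. supp (crd (b \<otimes> c)))"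
    then have "\<And>b c. b \<in> supp u \<Longrightarrow> c \<in> supp v \<Longrightarrow> crd (b \<otimes> c) d = \<zero>" by (auto simp: supp_def)
    then have "tm u v d = \<zero>" unfolding tm_def using Tc_car[OF u] Tc_car[OF v]
      by (intro fz) (auto simp: supp_c[OF u] supp_c[OF v])
    then show False using d by (simp add: supp_def)
  qed
qed

lemma fin_UU: assumes u: "u \<in> Tc" and v: "v \<in> Tc"
  shows "finite (\<Union>b\<in>supp u. \<Union>c\<in>supp v. supp (crd (b \<otimes> c)))"
  "(\<Union>b\<in>supp u. \<Union>c\<in>supp v. supp (crd (b \<otimes> c))) \<subseteq> B"
proof -
  show "finite (\<Union>b\<in>supp u. \<Union>c\<in>supp v. supp (crd (b \<otimes> c)))"
    using Tc_fin[OF u] Tc_fin[OF v] crd_fin by (simp add: supp_c[OF u] supp_c[OF v])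
  show "(\<Union>b\<in>supp u. \<Union>c\<in>supp v. supp (crd (b \<otimes> c))) \<subseteq> B"
  proof (intro UN_least)
    fix b c assume "b \<in> supp u" "c \<in> supp v"
    then have "b \<otimes> c \<in> carrier R" using supp_c[OF u] supp_c[OF v] by simp
    then show "supp (crd (b \<otimes> c)) \<subseteq> B" by (rule crd_suppB)
  qed
qed

lemma tm_Tc: assumes u: "u \<in> Tc" and v: "v \<in> Tc" shows "tm u v \<in> Tc"
proof -
  have "finite (supp (tm u v))" using tm_supp_sub[OF u v] fin_UU[OF u v] finite_subset by blast
  then show ?thesis unfolding Tc_def using tm_car[OF u v] tm_out[OF u v] by auto
qed

lemma tm_comm: assumes u: "u \<in> Tc" and v: "v \<in> Tc" shows "tm u v = tm v u"
proof
  fix d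
  note uc = Tc_car[OF u] and vc = Tc_car[OF v] and su = supp_c[OF u] and sv = supp_c[OF v]
  note fu = Tc_fin[OF u] and fv = Tc_fin[OF v]
  have "tm u v d = (\<Oplus>b\<in>supp u. \<Oplus>c\<in>supp v. u b \<otimes> v c \<otimes> crd (b \<otimes> c) d)" by (simp add: tm_def)
  also have "\<dots> = (\<Oplus>c\<in>supp v. \<Oplus>b\<in>supp u. u b \<otimes> v c \<otimes> crd (b \<otimes> c) d)"
    using fu fv uc vc crd_car by (intro finsum_swap) (auto simp: su sv)
  also have "\<dots> = (\<Oplus>c\<in>supp v. \<Oplus>b\<in>supp u. v c \<otimes> u b \<otimes> crd (c \<otimes> b) d)"
    using fu fv uc vc crd_car
    by (intro finsum_cong') (auto intro!: finsum_cong' finsum_closed simp: su sv simp: m_comm)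
  also have "\<dots> = tm v u d" by (simp add: tm_def)
  finally show "tm u v d = tm v u d" .
qed

lemma tm_one: assumes v: "v \<in> Tc" shows "tm e1 v = v"
proof
  fix d
  note vc = Tc_car[OF v] and sv = supp_c[OF v] and fv = Tc_fin[OF v] and sB = Tc_suppB[OF v]
  have "tm e1 v d = (\<Oplus>b\<in>{\<one>}. \<Oplus>c\<in>supp v. e1 b \<otimes> v c \<otimes> crd (b \<otimes> c) d)"
    by (simp add: tm_def supp_e1)
  also have "\<dots> = (\<Oplus>c\<in>supp v. e1 \<one> \<otimes> v c \<otimes> crd (\<one> \<otimes> c) d)"
    using fv vc crd_car by (intro fsum_single finsum_closed) (auto simp: e1_def simp: sv)
  also have "\<dots> = (\<Oplus>c\<in>supp v. if d = c then v c else \<zero>)"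
    using fv vc sB by (intro finsum_cong') (auto simp: crd_basis e1_def sv subset_iff)
  also have "\<dots> = v d"
  proof (cases "d \<in> supp v")
    case True then show ?thesis using fv vc
      by (subst add.finprod_singleton) auto
  next
    case False
    have "(\<Oplus>c\<in>supp v. if d = c then v c else \<zero>) = \<zero>" by (rule fz) (use False in auto)
    then show ?thesis using not_supp[OF False] by simp
  qed
  finally show "tm e1 v d = v d" .
qed

lemma add_Tc: assumes u: "u \<in> Tc" and v: "v \<in> Tc" shows "(\<lambda>x. u x \<oplus> v x) \<in> Tc"
proof -
  have "supp (\<lambda>x. u x \<oplus> v x) \<subseteq> supp u \<union> supp v" by (auto simp: supp_def)
  then have "finite (supp (\<lambda>x. u x \<oplus> v x))" using Tc_fin[OF u] Tc_fin[OF v] finite_subset by blast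
  then show ?thesis unfolding Tc_def using Tc_car[OF u] Tc_car[OF v] Tc_out[OF u] Tc_out[OF v] by auto
qed

lemma tm_distr: assumes u: "u \<in> Tc" and v: "v \<in> Tc" and w: "w \<in> Tc"
  shows "tm (\<lambda>x. u x \<oplus> v x) w = (\<lambda>d. tm u w d \<oplus> tm v w d)"
proof
  fix d
  let ?F = "supp u \<union> supp v"
  note uc = Tc_car[OF u] and vc = Tc_car[OF v] and wc = Tc_car[OF w] and sw = supp_c[OF w]
  have uv: "(\<lambda>x. u x \<oplus> v x) \<in> Tc" using add_Tc[OF u v] .
  have F: "finite ?F" "?F \<subseteq> carrier R" using u v Tc_fin Tc_suppc by auto
  have W: "finite (supp w)" "supp w \<subseteq> carrier R" using w Tc_fin Tc_suppc by auto
  have Fc: "\<And>x. x \<in> ?F \<Longrightarrow> x \<in> carrier R" using F by auto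
  have suv: "supp (\<lambda>x. u x \<oplus> v x) \<subseteq> ?F" by (auto simp: supp_def)
  have "tm (\<lambda>x. u x \<oplus> v x) w d = (\<Oplus>b\<in>?F. \<Oplus>c\<in>supp w. (u b \<oplus> v b) \<otimes> w c \<otimes> crd (b \<otimes> c) d)"
    using tm_sup[OF uv w F(1) suv F(2) W(1) _ W(2)] by simp
  also have "\<dots> = (\<Oplus>b\<in>?F. (\<Oplus>c\<in>supp w. u b \<otimes> w c \<otimes> crd (b \<otimes> c) d) \<oplus>
                               (\<Oplus>c\<in>supp w. v b \<otimes> w c \<otimes> crd (b \<otimes> c) d))"
  proof (rule finsum_cong')
    fix b assume b: "b \<in> ?F"
    have "(\<Oplus>c\<in>supp w. (u b \<oplus> v b) \<otimes> w c \<otimes> crd (b \<otimes> c) d) =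
          (\<Oplus>c\<in>supp w. u b \<otimes> w c \<otimes> crd (b \<otimes> c) d \<oplus> v b \<otimes> w c \<otimes> crd (b \<otimes> c) d)"
      using b Fc W uc vc wc crd_car by (intro finsum_cong') (auto simp: l_distr simp: sw)
    also have "\<dots> = (\<Oplus>c\<in>supp w. u b \<otimes> w c \<otimes> crd (b \<otimes> c) d) \<oplus>
                               (\<Oplus>c\<in>supp w. v b \<otimes> w c \<otimes> crd (b \<otimes> c) d)"
      using b Fc W uc vc wc crd_car by (subst finsum_addf) (auto simp: sw)
    finally show "(\<Oplus>c\<in>supp w. (u b \<oplus> v b) \<otimes> w c \<otimes> crd (b \<otimes> c) d) =
          (\<Oplus>c\<in>supp w. u b \<otimes> w c \<otimes> crd (b \<otimes> c) d) \<oplus>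
                               (\<Oplus>c\<in>supp w. v b \<otimes> w c \<otimes> crd (b \<otimes> c) d)" .
  qed (use Fc W uc vc wc crd_car in \<open>auto intro!: finsum_closed simp: sw\<close>)
  also have "\<dots> = (\<Oplus>b\<in>?F. \<Oplus>c\<in>supp w. u b \<otimes> w c \<otimes> crd (b \<otimes> c) d) \<oplus>
                  (\<Oplus>b\<in>?F. \<Oplus>c\<in>supp w. v b \<otimes> w c \<otimes> crd (b \<otimes> c) d)"
    using F Fc W uc vc wc crd_car by (subst finsum_addf) (auto intro!: finsum_closed simp: sw)
  also have "\<dots> = tm u w d \<oplus> tm v w d"
    using tm_sup[OF u w F(1) _ F(2) W(1) _ W(2)] tm_sup[OF v w F(1) _ F(2) W(1) _ W(2)] by auto
  finally show "tm (\<lambda>x. u x \<oplus> v x) w d = tm u w d \<oplus> tm v w d" .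
qed

end

context bas
begin

definition Lin :: "('a \<Rightarrow> 'a) \<Rightarrow> bool" where
  "Lin f \<longleftrightarrow> (\<forall>x\<in>carrier R. f x \<in> carrier R) \<and> (\<forall>x\<in>carrier R. \<forall>y\<in>carrier R. f (x \<oplus> y) = f x \<oplus> f y)
     \<and> (\<forall>k\<in>K. \<forall>x\<in>carrier R. f (k \<otimes> x) = k \<otimes> f x)"

lemma Lin_car: "Lin f \<Longrightarrow> x \<in> carrier R \<Longrightarrow> f x \<in> carrier R" by (simp add: Lin_def)
lemma Lin_add: "Lin f \<Longrightarrow> x \<in> carrier R \<Longrightarrow> y \<in> carrier R \<Longrightarrow> f (x \<oplus> y) = f x \<oplus> f y" by (simp add: Lin_def)
lemma Lin_smul: "Lin f \<Longrightarrow> k \<in> K \<Longrightarrow> x \<in> carrier R \<Longrightarrow> f (k \<otimes> x) = k \<otimes> f x" by (simp add: Lin_def)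

lemma Lin_zero: assumes "Lin f" shows "f \<zero> = \<zero>"
proof -
  have "f (\<zero> \<otimes> \<zero>) = \<zero> \<otimes> f \<zero>" using Lin_smul[OF assms K_closed(1)] by simp
  then show ?thesis using Lin_car[OF assms, of \<zero>] by simp
qed

lemma Lin_sum:
  assumes f: "Lin f" and "finite I" "\<And>i. i \<in> I \<Longrightarrow> k i \<in> K" "\<And>i. i \<in> I \<Longrightarrow> g i \<in> carrier R"
  shows "f (\<Oplus>i\<in>I. k i \<otimes> g i) = (\<Oplus>i\<in>I. k i \<otimes> f (g i))"
  using assms(2-)
proof (induction I rule: finite_induct)
  case empty then show ?case by (simp add: Lin_zero[OF f])
next
  case (insert a I)
  have kc: "\<And>i. i \<in> insert a I \<Longrightarrow> k i \<in> carrier R" using insert K_sub by auto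
  have "f (\<Oplus>i\<in>insert a I. k i \<otimes> g i) = f (k a \<otimes> g a \<oplus> (\<Oplus>i\<in>I. k i \<otimes> g i))"
    using insert kc by (subst finsum_insert) auto
  also have "\<dots> = k a \<otimes> f (g a) \<oplus> f (\<Oplus>i\<in>I. k i \<otimes> g i)"
    using insert kc by (subst Lin_add[OF f]) (auto intro!: finsum_closed simp: Lin_smul[OF f])
  also have "\<dots> = (\<Oplus>i\<in>insert a I. k i \<otimes> f (g i))"
    using insert kc Lin_car[OF f] by (subst finsum_insert) auto
  finally show ?case .
qed

definition P :: "('a \<Rightarrow> 'a) \<Rightarrow> ('a \<Rightarrow> 'a) \<Rightarrow> 'a \<Rightarrow> 'a" where
  "P u f x = (\<Oplus>b\<in>supp u. u b \<otimes> f (b \<otimes> x))"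

lemma P_car: assumes u: "u \<in> Tc" and f: "Lin f" and x: "x \<in> carrier R" shows "P u f x \<in> carrier R"
  unfolding P_def using Tc_car[OF u] Tc_fin[OF u] x Lin_car[OF f]
  by (auto intro!: finsum_closed simp: supp_c[OF u])

lemma P_sup: assumes u: "u \<in> Tc" and f: "Lin f" and x: "x \<in> carrier R"
  and F: "finite F" "supp u \<subseteq> F" "F \<subseteq> carrier R"
  shows "P u f x = (\<Oplus>b\<in>F. u b \<otimes> f (b \<otimes> x))"
  unfolding P_def using F Tc_car[OF u] x Lin_car[OF f]
  by (intro add.finprod_mono_neutral_cong_right[symmetric]) (auto simp: supp_def subset_iff)

lemma P_cong: assumes u: "u \<in> Tc" and x: "x \<in> carrier R" and fg: "\<And>y. y \<in> carrier R \<Longrightarrow> f y = g y"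
  and g: "Lin g"
  shows "P u f x = P u g x"
  unfolding P_def using x fg Lin_car[OF g] Tc_car[OF u] by (intro finsum_cong) (auto simp: supp_c[OF u])

lemma P_Lin: assumes u: "u \<in> Tc" and f: "Lin f" shows "Lin (P u f)"
  unfolding Lin_def
proof (intro conjI ballI)
  fix x assume "x \<in> carrier R" then show "P u f x \<in> carrier R" by (rule P_car[OF u f])
next
  fix x y assume x: "x \<in> carrier R" and y: "y \<in> carrier R"
  note uc = Tc_car[OF u] and su = supp_c[OF u] and fu = Tc_fin[OF u]
  have "P u f (x \<oplus> y) = (\<Oplus>b\<in>supp u. u b \<otimes> f (b \<otimes> x) \<oplus> u b \<otimes> f (b \<otimes> y))"
    unfolding P_def using x y uc Lin_car[OF f]
    by (intro finsum_cong') (auto simp: su r_distr Lin_add[OF f])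
  also have "\<dots> = P u f x \<oplus> P u f y"
    unfolding P_def using x y uc Lin_car[OF f] fu
    by (subst finsum_addf) (auto simp: su)
  finally show "P u f (x \<oplus> y) = P u f x \<oplus> P u f y" .
next
  fix k x assume k: "k \<in> K" and x: "x \<in> carrier R"
  note uc = Tc_car[OF u] and su = supp_c[OF u] and fu = Tc_fin[OF u]
  have kc: "k \<in> carrier R" using k K_sub by auto
  have "P u f (k \<otimes> x) = (\<Oplus>b\<in>supp u. k \<otimes> (u b \<otimes> f (b \<otimes> x)))"
  proof (unfold P_def, rule finsum_cong')
    fix b assume b: "b \<in> supp u"
    then have bc: "b \<in> carrier R" by (simp add: su)
    have "b \<otimes> (k \<otimes> x) = k \<otimes> (b \<otimes> x)" using bc kc x by (simp add: m_lcomm)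
    then have "f (b \<otimes> (k \<otimes> x)) = k \<otimes> f (b \<otimes> x)" using Lin_smul[OF f k] bc x by simp
    then show "u b \<otimes> f (b \<otimes> (k \<otimes> x)) = k \<otimes> (u b \<otimes> f (b \<otimes> x))"
      using bc kc x uc Lin_car[OF f] by (simp add: m_lcomm)
  qed (use x kc uc Lin_car[OF f] in \<open>auto simp: su\<close>)
  also have "\<dots> = k \<otimes> P u f x"
    unfolding P_def using x kc uc Lin_car[OF f] fu
    by (subst finsum_rdistr) (auto simp: su)
  finally show "P u f (k \<otimes> x) = k \<otimes> P u f x" .
qed

lemma rdist2:
  assumes "finite D" "a \<in> carrier R" "b \<in> carrier R" "\<And>d. d \<in> D \<Longrightarrow> k d \<in> carrier R"
    "\<And>d. d \<in> D \<Longrightarrow> g d \<in> carrier R"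
  shows "a \<otimes> (b \<otimes> (\<Oplus>d\<in>D. k d \<otimes> g d)) = (\<Oplus>d\<in>D. a \<otimes> b \<otimes> k d \<otimes> g d)"
proof -
  have "a \<otimes> (b \<otimes> (\<Oplus>d\<in>D. k d \<otimes> g d)) = (a \<otimes> b) \<otimes> (\<Oplus>d\<in>D. k d \<otimes> g d)"
    using assms by (simp add: m_assoc finsum_closed)
  also have "\<dots> = (\<Oplus>d\<in>D. (a \<otimes> b) \<otimes> (k d \<otimes> g d))"
    using assms by (subst finsum_rdistr) auto
  also have "\<dots> = (\<Oplus>d\<in>D. a \<otimes> b \<otimes> k d \<otimes> g d)"
    using assms by (intro finsum_cong') (auto simp: m_assoc)
  finally show ?thesis .
qed

lemma ldist2:
  assumes "finite U" "finite V" "y \<in> carrier R" "\<And>b c. b \<in> U \<Longrightarrow> c \<in> V \<Longrightarrow> Xf b c \<in> carrier R"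
  shows "(\<Oplus>b\<in>U. \<Oplus>c\<in>V. Xf b c) \<otimes> y = (\<Oplus>b\<in>U. \<Oplus>c\<in>V. Xf b c \<otimes> y)"
proof -
  have "(\<Oplus>b\<in>U. \<Oplus>c\<in>V. Xf b c) \<otimes> y = (\<Oplus>b\<in>U. (\<Oplus>c\<in>V. Xf b c) \<otimes> y)"
    using assms by (subst finsum_ldistr) (auto intro!: finsum_closed)
  also have "\<dots> = (\<Oplus>b\<in>U. \<Oplus>c\<in>V. Xf b c \<otimes> y)"
    using assms by (intro finsum_cong') (auto intro!: finsum_closed simp: finsum_ldistr)
  finally show ?thesis .
qed

lemma P_comp: assumes u: "u \<in> Tc" and v: "v \<in> Tc" and f: "Lin f" and x: "x \<in> carrier R"
  shows "P u (P v f) x = P (tm u v) f x"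
proof -
  let ?U = "supp u" and ?V = "supp v"
  define D where "D = (\<Union>b\<in>supp u. \<Union>c\<in>supp v. supp (crd (b \<otimes> c)))"
  note uc = Tc_car[OF u] and su = supp_c[OF u] and fu = Tc_fin[OF u]
  note vc = Tc_car[OF v] and sv = supp_c[OF v] and fv = Tc_fin[OF v]
  have fD: "finite D" and DB: "D \<subseteq> B" using fin_UU[OF u v] unfolding D_def by auto
  have Dc: "\<And>d. d \<in> D \<Longrightarrow> d \<in> carrier R" using DB Bc by auto
  note fc = Lin_car[OF f]
  have stepA: "f (c \<otimes> (b \<otimes> x)) = (\<Oplus>d\<in>D. crd (b \<otimes> c) d \<otimes> f (d \<otimes> x))"
    if b: "b \<in> ?U" and c: "c \<in> ?V" for b c
  proof -
    have bc: "b \<in> carrier R" "c \<in> carrier R" using b c su sv by auto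
    have sD: "supp (crd (b \<otimes> c)) \<subseteq> D" using b c unfolding D_def by auto
    have "c \<otimes> (b \<otimes> x) = (b \<otimes> c) \<otimes> x" using bc x by (simp add: m_assoc m_lcomm)
    also have "\<dots> = (\<Oplus>d\<in>D. crd (b \<otimes> c) d \<otimes> d) \<otimes> x"
    proof -
      have bcc: "b \<otimes> c \<in> carrier R" using bc by simp
      show ?thesis using DB Bc by (subst crd_sum[OF bcc fD sD]) auto
    qed
    also have "\<dots> = (\<Oplus>d\<in>D. crd (b \<otimes> c) d \<otimes> (d \<otimes> x))"
      using fD x bc Dc crd_car by (subst finsum_ldistr) (auto intro!: finsum_cong' simp: m_assoc)
    finally have "f (c \<otimes> (b \<otimes> x)) = f (\<Oplus>d\<in>D. crd (b \<otimes> c) d \<otimes> (d \<otimes> x))" by simp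
    also have "\<dots> = (\<Oplus>d\<in>D. crd (b \<otimes> c) d \<otimes> f (d \<otimes> x))"
      using Lin_sum[OF f fD, of "\<lambda>d. crd (b \<otimes> c) d" "\<lambda>d. d \<otimes> x"] bc x Dc crd_K by auto
    finally show ?thesis .
  qed
  have "P u (P v f) x = (\<Oplus>b\<in>?U. u b \<otimes> (\<Oplus>c\<in>?V. v c \<otimes> f (c \<otimes> (b \<otimes> x))))"
    unfolding P_def by simp
  also have "\<dots> = (\<Oplus>b\<in>?U. \<Oplus>c\<in>?V. \<Oplus>d\<in>D. u b \<otimes> v c \<otimes> crd (b \<otimes> c) d \<otimes> f (d \<otimes> x))"
  proof (rule finsum_cong')
    fix b assume b: "b \<in> ?U"
    have bc: "b \<in> carrier R" using b su by auto
    have "u b \<otimes> (\<Oplus>c\<in>?V. v c \<otimes> f (c \<otimes> (b \<otimes> x))) = (\<Oplus>c\<in>?V. u b \<otimes> (v c \<otimes> f (c \<otimes> (b \<otimes> x))))"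
      using fv uc vc fc bc x by (subst finsum_rdistr) (auto simp: sv)
    also have "\<dots> = (\<Oplus>c\<in>?V. \<Oplus>d\<in>D. u b \<otimes> v c \<otimes> crd (b \<otimes> c) d \<otimes> f (d \<otimes> x))"
    proof (rule finsum_cong')
      fix c assume c: "c \<in> ?V"
      have cc: "c \<in> carrier R" using c sv by auto
      show "u b \<otimes> (v c \<otimes> f (c \<otimes> (b \<otimes> x))) = (\<Oplus>d\<in>D. u b \<otimes> v c \<otimes> crd (b \<otimes> c) d \<otimes> f (d \<otimes> x))"
        unfolding stepA[OF b c] using fD uc vc bc cc x crd_car Dc fc by (intro rdist2) auto
    qed (use fD uc vc bc x crd_car Dc fc in \<open>auto intro!: finsum_closed simp: sv\<close>)
    finally show "u b \<otimes> (\<Oplus>c\<in>?V. v c \<otimes> f (c \<otimes> (b \<otimes> x))) =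
        (\<Oplus>c\<in>?V. \<Oplus>d\<in>D. u b \<otimes> v c \<otimes> crd (b \<otimes> c) d \<otimes> f (d \<otimes> x))" .
  qed (use fD fv uc vc x crd_car Dc fc in \<open>auto intro!: finsum_closed simp: sv su\<close>)
  also have "\<dots> = (\<Oplus>b\<in>?U. \<Oplus>d\<in>D. \<Oplus>c\<in>?V. u b \<otimes> v c \<otimes> crd (b \<otimes> c) d \<otimes> f (d \<otimes> x))"
  proof (rule finsum_cong')
    fix b assume b: "b \<in> ?U"
    show "(\<Oplus>c\<in>?V. \<Oplus>d\<in>D. u b \<otimes> v c \<otimes> crd (b \<otimes> c) d \<otimes> f (d \<otimes> x)) =
          (\<Oplus>d\<in>D. \<Oplus>c\<in>?V. u b \<otimes> v c \<otimes> crd (b \<otimes> c) d \<otimes> f (d \<otimes> x))"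
      using b fD fv uc vc x crd_car Dc fc by (intro finsum_swap) (auto simp: sv su)
  qed (use fD fv uc vc x crd_car Dc fc in \<open>auto intro!: finsum_closed simp: sv su\<close>)
  also have "\<dots> = (\<Oplus>d\<in>D. \<Oplus>b\<in>?U. \<Oplus>c\<in>?V. u b \<otimes> v c \<otimes> crd (b \<otimes> c) d \<otimes> f (d \<otimes> x))"
    using fD fv fu uc vc x crd_car Dc fc
    by (intro finsum_swap) (auto intro!: finsum_closed simp: sv su)
  also have "\<dots> = (\<Oplus>d\<in>D. tm u v d \<otimes> f (d \<otimes> x))"
  proof (rule finsum_cong')
    fix d assume d: "d \<in> D"
    show "(\<Oplus>b\<in>?U. \<Oplus>c\<in>?V. u b \<otimes> v c \<otimes> crd (b \<otimes> c) d \<otimes> f (d \<otimes> x)) = tm u v d \<otimes> f (d \<otimes> x)"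
      unfolding tm_def using fu fv uc vc x crd_car Dc[OF d] fc
      by (subst ldist2) (auto simp: sv su)
  qed (use fD fv uc vc x Dc fc tm_car[OF u v] in \<open>auto\<close>)
  also have "\<dots> = P (tm u v) f x"
  proof -
    have DcS: "D \<subseteq> carrier R" using DB Bc by auto
    show ?thesis by (rule sym, rule P_sup[OF tm_Tc[OF u v] f x fD tm_supp_sub[OF u v, folded D_def] DcS])
  qed
  finally show ?thesis .
qed

lemma Lin_crd: "Lin (\<lambda>y. crd y c)"
  unfolding Lin_def by (auto simp: crd_car crd_add crd_smul)

lemma P_eval: assumes u: "u \<in> Tc" shows "P u (\<lambda>y. crd y c) \<one> = u c"
proof -
  note uc = Tc_car[OF u] and su = supp_c[OF u] and fu = Tc_fin[OF u] and sB = Tc_suppB[OF u]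
  have "P u (\<lambda>y. crd y c) \<one> = (\<Oplus>b\<in>supp u. if c = b then u b else \<zero>)"
    unfolding P_def using uc sB by (intro finsum_cong') (auto simp: su crd_basis subset_iff)
  also have "\<dots> = u c"
  proof (cases "c \<in> supp u")
    case True then show ?thesis using fu uc by (subst add.finprod_singleton) auto
  next
    case False
    have "(\<Oplus>b\<in>supp u. if c = b then u b else \<zero>) = \<zero>" by (rule fz) (use False in auto)
    then show ?thesis using not_supp[OF False] by simp
  qed
  finally show ?thesis .
qed

lemma P_inj: assumes u: "u \<in> Tc" and v: "v \<in> Tc"
  and H: "\<And>f x. Lin f \<Longrightarrow> x \<in> carrier R \<Longrightarrow> P u f x = P v f x"
  shows "u = v"
proof
  fix c
  show "u c = v c" using H[OF Lin_crd, of \<one> c] P_eval[OF u] P_eval[OF v] by simp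
qed

lemma tm_assoc: assumes u: "u \<in> Tc" and v: "v \<in> Tc" and w: "w \<in> Tc"
  shows "tm (tm u v) w = tm u (tm v w)"
proof (rule P_inj[OF tm_Tc[OF tm_Tc[OF u v] w] tm_Tc[OF u tm_Tc[OF v w]]])
  fix f x assume f: "Lin f" and x: "x \<in> carrier R"
  have "P (tm (tm u v) w) f x = P (tm u v) (P w f) x"
    using P_comp[OF tm_Tc[OF u v] w f x] by simp
  also have "\<dots> = P u (P v (P w f)) x"
    using P_comp[OF u v P_Lin[OF w f] x] by simp
  also have "\<dots> = P u (P (tm v w) f) x"
  proof -
    have "\<And>y. y \<in> carrier R \<Longrightarrow> P v (P w f) y = P (tm v w) f y" using P_comp[OF v w f] by blast
    then show ?thesis by (rule P_cong[OF u x _ P_Lin[OF tm_Tc[OF v w] f]])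
  qed
  also have "\<dots> = P (tm u (tm v w)) f x"
    using P_comp[OF u tm_Tc[OF v w] f x] by simp
  finally show "P (tm (tm u v) w) f x = P (tm u (tm v w)) f x" .
qed

end

context bas
begin

lemma zero_Tc: "(\<lambda>x. \<zero>) \<in> Tc" unfolding Tc_def supp_def by auto

lemma neg_Tc: "u \<in> Tc \<Longrightarrow> (\<lambda>x. \<ominus> u x) \<in> Tc"
  unfolding Tc_def supp_def using Tc_car by auto

lemma cring_T0: "cring T0"
proof (rule cringI)
  show "abelian_group T0"
  proof (rule abelian_groupI)
    fix x y assume "x \<in> carrier T0" "y \<in> carrier T0"
    then show "x \<oplus>\<^bsub>T0\<^esub> y \<in> carrier T0" using add_Tc by simp
  next
    show "\<zero>\<^bsub>T0\<^esub> \<in> carrier T0" using zero_Tc by simp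
  next
    fix x y z assume "x \<in> carrier T0" "y \<in> carrier T0" "z \<in> carrier T0"
    then show "x \<oplus>\<^bsub>T0\<^esub> y \<oplus>\<^bsub>T0\<^esub> z = x \<oplus>\<^bsub>T0\<^esub> (y \<oplus>\<^bsub>T0\<^esub> z)"
      by (auto simp: fun_eq_iff a_assoc Tc_car)
  next
    fix x y assume "x \<in> carrier T0" "y \<in> carrier T0"
    then show "x \<oplus>\<^bsub>T0\<^esub> y = y \<oplus>\<^bsub>T0\<^esub> x"
      by (auto simp: fun_eq_iff a_comm Tc_car)
  next
    fix x assume "x \<in> carrier T0"
    then show "\<zero>\<^bsub>T0\<^esub> \<oplus>\<^bsub>T0\<^esub> x = x" by (auto simp: fun_eq_iff Tc_car)
  next
    fix x assume x: "x \<in> carrier T0"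
    show "\<exists>y\<in>carrier T0. y \<oplus>\<^bsub>T0\<^esub> x = \<zero>\<^bsub>T0\<^esub>"
      using x neg_Tc by (intro bexI[of _ "\<lambda>a. \<ominus> x a"]) (auto simp: fun_eq_iff Tc_car l_neg)
  qed
next
  show "comm_monoid T0"
  proof (rule comm_monoidI)
    fix x y assume "x \<in> carrier T0" "y \<in> carrier T0"
    then show "x \<otimes>\<^bsub>T0\<^esub> y \<in> carrier T0" using tm_Tc by simp
  next
    show "\<one>\<^bsub>T0\<^esub> \<in> carrier T0" using e1_Tc by simp
  next
    fix x y z assume "x \<in> carrier T0" "y \<in> carrier T0" "z \<in> carrier T0"
    then show "x \<otimes>\<^bsub>T0\<^esub> y \<otimes>\<^bsub>T0\<^esub> z = x \<otimes>\<^bsub>T0\<^esub> (y \<otimes>\<^bsub>T0\<^esub> z)" using tm_assoc by simp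
  next
    fix x assume "x \<in> carrier T0"
    then show "\<one>\<^bsub>T0\<^esub> \<otimes>\<^bsub>T0\<^esub> x = x" using tm_one by simp
  next
    fix x y assume "x \<in> carrier T0" "y \<in> carrier T0"
    then show "x \<otimes>\<^bsub>T0\<^esub> y = y \<otimes>\<^bsub>T0\<^esub> x" using tm_comm by simp
  qed
next
  fix x y z assume "x \<in> carrier T0" "y \<in> carrier T0" "z \<in> carrier T0"
  then show "(x \<oplus>\<^bsub>T0\<^esub> y) \<otimes>\<^bsub>T0\<^esub> z = x \<otimes>\<^bsub>T0\<^esub> z \<oplus>\<^bsub>T0\<^esub> y \<otimes>\<^bsub>T0\<^esub> z"
    using tm_distr by simp
qed

definition gK :: "'a \<Rightarrow> 'a \<Rightarrow> 'a" where "gK y = (\<lambda>x. if x = \<one> then y else \<zero>)"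

lemma gK_Tc: assumes "y \<in> carrier R" shows "gK y \<in> Tc"
proof -
  have "supp (gK y) \<subseteq> {\<one>}" by (auto simp: supp_def gK_def)
  then show ?thesis unfolding Tc_def using assms B1 finite_subset by (auto simp: gK_def)
qed

lemma gK_hom: "gK \<in> ring_hom R T0"
proof (rule ring_hom_memI)
  fix x assume "x \<in> carrier R" then show "gK x \<in> carrier T0" using gK_Tc by simp
next
  fix y z assume y: "y \<in> carrier R" and z: "z \<in> carrier R"
  show "gK (y \<otimes> z) = gK y \<otimes>\<^bsub>T0\<^esub> gK z"
  proof (simp, rule ext)
    fix d
    have s1: "supp (gK y) \<subseteq> {\<one>}" "supp (gK z) \<subseteq> {\<one>}" by (auto simp: supp_def gK_def)
    have "tm (gK y) (gK z) d = (\<Oplus>b\<in>{\<one>}. \<Oplus>c\<in>{\<one>}. gK y b \<otimes> gK z c \<otimes> crd (b \<otimes> c) d)"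
      by (rule tm_sup[OF gK_Tc[OF y] gK_Tc[OF z]]) (use s1 in auto)
    also have "\<dots> = y \<otimes> z \<otimes> crd \<one> d" using y z crd_car by (simp add: fsum_single gK_def)
    also have "\<dots> = gK (y \<otimes> z) d" using y z by (simp add: crd_basis[OF B1] gK_def)
    finally show "gK (y \<otimes> z) d = tm (gK y) (gK z) d" by simp
  qed
next
  fix y z assume y: "y \<in> carrier R" and z: "z \<in> carrier R"
  show "gK (y \<oplus> z) = gK y \<oplus>\<^bsub>T0\<^esub> gK z" by (auto simp: gK_def fun_eq_iff)
next
  show "gK \<one> = \<one>\<^bsub>T0\<^esub>" by (simp add: gK_def e1_def)
qed

lemma crd_mult: assumes y: "y \<in> carrier R" and z: "z \<in> carrier R"
  shows "crd (y \<otimes> z) = tm (crd y) (crd z)"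
proof
  fix d
  let ?Y = "supp (crd y)" and ?Z = "supp (crd z)"
  have fY: "finite ?Y" "?Y \<subseteq> carrier R" using crd_fin[OF y] crd_suppB[OF y] Bc by auto
  have fZ: "finite ?Z" "?Z \<subseteq> carrier R" using crd_fin[OF z] crd_suppB[OF z] Bc by auto
  have Yc: "\<And>b. b \<in> ?Y \<Longrightarrow> b \<in> carrier R" and Zc: "\<And>c. c \<in> ?Z \<Longrightarrow> c \<in> carrier R" using fY fZ by auto
  have inner: "crd (b \<otimes> z) d = (\<Oplus>c\<in>?Z. crd z c \<otimes> crd (b \<otimes> c) d)" if b: "b \<in> carrier R" for b
  proof -
    have "b \<otimes> z = b \<otimes> (\<Oplus>c\<in>?Z. crd z c \<otimes> c)" using crd_sum[OF z fZ(1) _ fZ(2)] by simp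
    also have "\<dots> = (\<Oplus>c\<in>?Z. crd z c \<otimes> (b \<otimes> c))"
      using fZ b crd_car[OF z] by (subst finsum_rdistr) (auto intro!: finsum_cong' simp: Zc m_lcomm)
    finally have "crd (b \<otimes> z) d = crd (\<Oplus>c\<in>?Z. crd z c \<otimes> (b \<otimes> c)) d" by simp
    also have "\<dots> = (\<Oplus>c\<in>?Z. crd z c \<otimes> crd (b \<otimes> c) d)"
      using fZ b crd_K[OF z] by (subst crd_lin_sum) (auto simp: Zc)
    finally show ?thesis .
  qed
  have "y \<otimes> z = (\<Oplus>b\<in>?Y. crd y b \<otimes> b) \<otimes> z" using crd_sum[OF y fY(1) _ fY(2)] by simp
  also have "\<dots> = (\<Oplus>b\<in>?Y. crd y b \<otimes> (b \<otimes> z))"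
    using fY z crd_car[OF y] by (subst finsum_ldistr) (auto intro!: finsum_cong' simp: Yc m_assoc)
  finally have "crd (y \<otimes> z) d = crd (\<Oplus>b\<in>?Y. crd y b \<otimes> (b \<otimes> z)) d" by simp
  also have "\<dots> = (\<Oplus>b\<in>?Y. crd y b \<otimes> crd (b \<otimes> z) d)"
    using fY z crd_K[OF y] by (subst crd_lin_sum) (auto simp: Yc)
  also have "\<dots> = (\<Oplus>b\<in>?Y. \<Oplus>c\<in>?Z. crd y b \<otimes> crd z c \<otimes> crd (b \<otimes> c) d)"
  proof (rule finsum_cong')
    fix b assume b: "b \<in> ?Y"
    show "crd y b \<otimes> crd (b \<otimes> z) d = (\<Oplus>c\<in>?Z. crd y b \<otimes> crd z c \<otimes> crd (b \<otimes> c) d)"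
      unfolding inner[OF Yc[OF b]] using fZ b crd_car[OF y] crd_car[OF z] crd_car Yc[OF b]
      by (subst finsum_rdistr) (auto intro!: finsum_cong' simp: Zc m_assoc)
  qed (use fZ crd_car[OF y] crd_car[OF z] crd_car in \<open>auto intro!: finsum_closed simp: Yc Zc\<close>)
  also have "\<dots> = tm (crd y) (crd z) d" by (simp add: tm_def)
  finally show "crd (y \<otimes> z) d = tm (crd y) (crd z) d" .
qed

lemma crd_hom: "crd \<in> ring_hom R T0"
proof (rule ring_hom_memI)
  fix x assume "x \<in> carrier R" then show "crd x \<in> carrier T0" using crd_Tc by simp
next
  fix y z assume "y \<in> carrier R" "z \<in> carrier R"
  then show "crd (y \<otimes> z) = crd y \<otimes>\<^bsub>T0\<^esub> crd z" using crd_mult by simp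
next
  fix y z assume "y \<in> carrier R" "z \<in> carrier R"
  then show "crd (y \<oplus> z) = crd y \<oplus>\<^bsub>T0\<^esub> crd z" using crd_add by simp
next
  show "crd \<one> = \<one>\<^bsub>T0\<^esub>" using crd_basis[OF B1] by (simp add: e1_def)
qed

lemma gK_K: "k \<in> K \<Longrightarrow> gK k = crd k"
  using crd_Kel by (simp add: gK_def)

lemma gK_sep: assumes "s \<in> carrier R" "gK s = crd s" shows "s \<in> K"
proof -
  have "gK s \<one> = crd s \<one>" using assms by simp
  then have e: "crd s \<one> = s" by (simp add: gK_def)
  show ?thesis using crd_K[OF assms(1), of \<one>] unfolding e .
qed

end

definition gr :: "('a \<Rightarrow> 'a) \<Rightarrow> ('a \<times> 'a) set" where "gr u = {(x, u x) | x. True}"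
definition ungr :: "('a \<times> 'a) set \<Rightarrow> 'a \<Rightarrow> 'a" where "ungr W = (\<lambda>x. THE y. (x, y) \<in> W)"

lemma ungr_gr [simp]: "ungr (gr u) = u"
  by (auto simp: ungr_def gr_def fun_eq_iff)

lemma gr_inj: "gr u = gr v \<Longrightarrow> u = v"
  by (metis ungr_gr)

definition TT :: "('a \<Rightarrow> 'a) ring \<Rightarrow> ('a \<times> 'a) set ring" where
  "TT A = \<lparr>carrier = gr ` carrier A, monoid.mult = (\<lambda>U V. gr (ungr U \<otimes>\<^bsub>A\<^esub> ungr V)),
     one = gr \<one>\<^bsub>A\<^esub>, ring.zero = gr \<zero>\<^bsub>A\<^esub>, ring.add = (\<lambda>U V. gr (ungr U \<oplus>\<^bsub>A\<^esub> ungr V))\<rparr>"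

lemma gr_iso: "gr \<in> ring_iso A (TT A)"
proof -
  have 1: "gr \<in> ring_hom A (TT A)"
    by (rule ring_hom_memI) (auto simp: TT_def)
  have 2: "bij_betw gr (carrier A) (carrier (TT A))"
    unfolding bij_betw_def TT_def using gr_inj by (auto simp: inj_on_def)
  show ?thesis unfolding ring_iso_def using 1 2 by blast
qed

lemma cring_TT: assumes "cring A" shows "cring (TT A)"
proof -
  have "cring ((TT A)\<lparr>zero := gr \<zero>\<^bsub>A\<^esub>\<rparr>)"
    using cring.ring_iso_imp_img_cring[OF assms gr_iso] .
  moreover have "(TT A)\<lparr>zero := gr \<zero>\<^bsub>A\<^esub>\<rparr> = TT A" by (simp add: TT_def)
  ultimately show ?thesis by simp
qed

context sf
begin

lemma epi_K:
  assumes H: "\<And>(T :: ('a \<times> 'a) set ring) g h. cring T \<Longrightarrow> g \<in> ring_hom R T \<Longrightarrow> h \<in> ring_hom R T \<Longrightarrow>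
      (\<forall>k\<in>K. g k = h k) \<Longrightarrow> \<forall>s\<in>carrier R. g s = h s"
  shows "carrier R \<subseteq> K"
proof -
  obtain B where B: "\<one> \<in> B" "lind B" "carrier R \<subseteq> lspn B" using exists_basis by blast
  interpret b: bas K R B by (intro bas.intro sf_axioms bas_axioms.intro B)
  have c: "cring (TT b.T0)" by (rule cring_TT[OF b.cring_T0])
  have g: "gr \<circ> b.gK \<in> ring_hom R (TT b.T0)"
    using ring_hom_trans[OF b.gK_hom] gr_iso unfolding ring_iso_def by blast
  have h: "gr \<circ> b.crd \<in> ring_hom R (TT b.T0)"
    using ring_hom_trans[OF b.crd_hom] gr_iso unfolding ring_iso_def by blast
  have "\<forall>k\<in>K. (gr \<circ> b.gK) k = (gr \<circ> b.crd) k" using b.gK_K by simp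
  then have all: "\<forall>s\<in>carrier R. (gr \<circ> b.gK) s = (gr \<circ> b.crd) s" using H[OF c g h] by blast
  show ?thesis
  proof
    fix s assume s: "s \<in> carrier R"
    then have "gr (b.gK s) = gr (b.crd s)" using all by simp
    then have "b.gK s = b.crd s" by (rule gr_inj)
    then show "s \<in> K" using b.gK_sep[OF s] by simp
  qed
qed

end

context cring
begin

lemma unit_cancel0: "u \<in> Units R \<Longrightarrow> x \<in> carrier R \<Longrightarrow> u \<otimes> x = \<zero> \<Longrightarrow> x = \<zero>"
  by (metis Units_closed Units_l_cancel r_null zero_closed)

lemma div_char: "u \<in> Units R \<Longrightarrow> x \<in> carrier R \<Longrightarrow> x \<otimes> u = a \<Longrightarrow> x = a \<otimes> inv u"
  by (auto simp: m_assoc Units_closed)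

lemma div_eq: assumes "b \<in> Units R" "d \<in> Units R" "a \<in> carrier R" "c \<in> carrier R" "a \<otimes> d = c \<otimes> b"
  shows "a \<otimes> inv b = c \<otimes> inv d"
proof -
  have bc: "b \<in> carrier R" "d \<in> carrier R" "inv b \<in> carrier R" using assms by auto
  have "(a \<otimes> inv b) \<otimes> d = (a \<otimes> d) \<otimes> inv b" using bc assms(3,4) by (simp add: m_ac)
  also have "\<dots> = (c \<otimes> b) \<otimes> inv b" using assms(5) by simp
  also have "\<dots> = c \<otimes> (b \<otimes> inv b)" using bc assms(3,4) by (simp add: m_assoc)
  also have "\<dots> = c" using assms by simp
  finally show ?thesis using div_char[OF assms(2)] bc assms by auto
qed

lemma div_eq_rev: assumes "b \<in> Units R" "d \<in> Units R" "a \<in> carrier R" "c \<in> carrier R"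
  "a \<otimes> inv b = c \<otimes> inv d" shows "a \<otimes> d = c \<otimes> b"
proof -
  have bc: "b \<in> carrier R" "d \<in> carrier R" "inv b \<in> carrier R" "inv d \<in> carrier R" using assms by auto
  have "a \<otimes> d = (a \<otimes> inv b) \<otimes> b \<otimes> d" using bc assms(1,3) by (simp add: m_assoc)
  also have "\<dots> = (c \<otimes> inv d) \<otimes> b \<otimes> d" using assms(5) by simp
  also have "\<dots> = (c \<otimes> inv d) \<otimes> d \<otimes> b" using bc assms(3,4) by (simp add: m_ac)
  also have "\<dots> = c \<otimes> b" using bc assms(2,4) by (simp add: m_assoc)
  finally show ?thesis .
qed

end

locale mc = cring R for R (structure) +
  fixes Q :: "('c, 'd) ring_scheme" and \<phi> :: "'c \<Rightarrow> 'a"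
  assumes Qc: "cring Q" and epi: "ring_epi Q R \<phi>" and nz: "\<one> \<noteq> \<zero>"
    and idem: "\<forall>e \<in> carrier R. e \<otimes> e = e \<longrightarrow> e = \<zero> \<or> e = \<one>"
    and pinv: "\<forall>r \<in> carrier Q. \<exists>b. pointwise_inverse R (\<phi> r) b"
begin

abbreviation "A \<equiv> \<phi> ` carrier Q"

lemma hom: "\<phi> \<in> ring_hom Q R" using epi unfolding ring_epi_def by blast

lemma A_sub: "subring A R"
proof -
  have Qr: "ring Q" using Qc cring.axioms(1) by blast
  interpret h: ring_hom_ring Q R \<phi> by (rule ring_hom_ringI2[OF Qr ring_axioms hom])
  show ?thesis by (rule h.img_is_subring[OF ring.carrier_is_subring[OF Qr]])
qed

lemma A_props: "A \<subseteq> carrier R" "\<zero> \<in> A" "\<one> \<in> A" "\<And>h. h \<in> A \<Longrightarrow> \<ominus> h \<in> A"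
  "\<And>a b. a \<in> A \<Longrightarrow> b \<in> A \<Longrightarrow> a \<otimes> b \<in> A" "\<And>a b. a \<in> A \<Longrightarrow> b \<in> A \<Longrightarrow> a \<oplus> b \<in> A"
  using subringE[OF A_sub] by auto

lemma A_car: "a \<in> A \<Longrightarrow> a \<in> carrier R" using A_props(1) by auto

lemma A_units: assumes a: "a \<in> A" and a0: "a \<noteq> \<zero>" shows "a \<in> Units R"
proof -
  obtain r where r: "r \<in> carrier Q" "a = \<phi> r" using a by blast
  obtain b where b: "pointwise_inverse R a b" using pinv r by blast
  have ac: "a \<in> carrier R" and bc: "b \<in> carrier R" and e1: "a = a \<otimes> a \<otimes> b"
    using b unfolding pointwise_inverse_def by auto
  have "(a \<otimes> b) \<otimes> (a \<otimes> b) = (a \<otimes> a \<otimes> b) \<otimes> b" using ac bc by (simp add: m_ac)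
  also have "\<dots> = a \<otimes> b" using e1 by simp
  finally have "a \<otimes> b = \<zero> \<or> a \<otimes> b = \<one>" using idem ac bc by auto
  moreover have "a \<otimes> b \<noteq> \<zero>"
  proof
    assume "a \<otimes> b = \<zero>"
    then have "a \<otimes> a \<otimes> b = \<zero>" using ac bc by (simp add: m_assoc)
    then show False using e1 a0 by simp
  qed
  ultimately have "a \<otimes> b = \<one>" by simp
  moreover have "b \<otimes> a = \<one>" using \<open>a \<otimes> b = \<one>\<close> ac bc m_comm by simp
  ultimately show ?thesis using ac bc unfolding Units_def by blast
qed

lemma A_mult_nz: "a \<in> A \<Longrightarrow> b \<in> A \<Longrightarrow> a \<noteq> \<zero> \<Longrightarrow> b \<noteq> \<zero> \<Longrightarrow> a \<otimes> b \<noteq> \<zero>"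
  using A_units unit_cancel0 A_car by blast

lemma domainA: "domain (R\<lparr>carrier := A\<rparr>)"
proof -
  have "subdomain A R"
  proof (rule subdomain.intro)
    show "subcring A R" by (rule subcringI'[OF A_sub])
    show "subdomain_axioms A R" unfolding subdomain_axioms_def using nz A_mult_nz by auto
  qed
  then show ?thesis using subdomain_iff[OF A_props(1)] by simp
qed

definition K :: "'a set" where
  "K = {x \<in> carrier R. \<exists>a\<in>A. \<exists>b\<in>A. b \<noteq> \<zero> \<and> x \<otimes> b = a}"

lemma KI: "x \<in> carrier R \<Longrightarrow> a \<in> A \<Longrightarrow> b \<in> A \<Longrightarrow> b \<noteq> \<zero> \<Longrightarrow> x \<otimes> b = a \<Longrightarrow> x \<in> K"
  unfolding K_def by blast

lemma KE: assumes "x \<in> K" obtains a b where "x \<in> carrier R" "a \<in> A" "b \<in> A" "b \<noteq> \<zero>" "x \<otimes> b = a"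
  using assms unfolding K_def by blast

lemma AK: "A \<subseteq> K"
proof
  fix a assume "a \<in> A" then show "a \<in> K" using A_props(3) nz A_car by (intro KI[of a a \<one>]) auto
qed

lemma K_inv: assumes x: "x \<in> K" "x \<noteq> \<zero>" shows "\<exists>y\<in>K. x \<otimes> y = \<one>"
proof -
  obtain a b where ab: "x \<in> carrier R" "a \<in> A" "b \<in> A" "b \<noteq> \<zero>" "x \<otimes> b = a" using KE[OF x(1)] by blast
  have bu: "b \<in> Units R" using A_units ab by auto
  have a0: "a \<noteq> \<zero>"
  proof
    assume "a = \<zero>"
    then have "b \<otimes> x = \<zero>" using ab A_car m_comm by auto
    then show False using unit_cancel0[OF bu ab(1)] x(2) by simp
  qed
  have au: "a \<in> Units R" using A_units ab a0 by auto
  let ?y = "b \<otimes> inv a"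
  have yc: "?y \<in> carrier R" using au ab A_car by auto
  have "?y \<otimes> a = b" using au ab A_car by (simp add: m_assoc)
  then have "?y \<in> K" using yc ab a0 by (intro KI[of ?y b a]) auto
  moreover have "x \<otimes> ?y = \<one>" using ab au A_car by (simp flip: m_assoc)
  ultimately show ?thesis by blast
qed

lemma K_subring: "subring K R"
proof (rule subringI)
  show "K \<subseteq> carrier R" unfolding K_def by auto
  show "\<one> \<in> K" using AK A_props(3) by auto
next
  fix h assume "h \<in> K"
  then obtain a b where ab: "h \<in> carrier R" "a \<in> A" "b \<in> A" "b \<noteq> \<zero>" "h \<otimes> b = a" using KE by blast
  have "(\<ominus> h) \<otimes> b = \<ominus> a" using ab A_car by (simp add: l_minus)
  then show "\<ominus> h \<in> K" using ab A_props(4) by (intro KI[of _ "\<ominus> a" b]) auto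
next
  fix x y assume "x \<in> K" "y \<in> K"
  then obtain a b c d where ab: "x \<in> carrier R" "a \<in> A" "b \<in> A" "b \<noteq> \<zero>" "x \<otimes> b = a"
    and cd: "y \<in> carrier R" "c \<in> A" "d \<in> A" "d \<noteq> \<zero>" "y \<otimes> d = c" by (metis KE)
  have "(x \<otimes> y) \<otimes> (b \<otimes> d) = (x \<otimes> b) \<otimes> (y \<otimes> d)"
    using ab(1,3) cd(1,3) A_car by (simp add: m_ac)
  then have "(x \<otimes> y) \<otimes> (b \<otimes> d) = a \<otimes> c" using ab(5) cd(5) by simp
  then show "x \<otimes> y \<in> K" using ab cd A_props(5) A_mult_nz by (intro KI[of _ "a \<otimes> c" "b \<otimes> d"]) auto
  have "(x \<oplus> y) \<otimes> (b \<otimes> d) = (x \<otimes> b) \<otimes> d \<oplus> (y \<otimes> d) \<otimes> b"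
    using ab(1,3) cd(1,3) A_car by (simp add: l_distr r_distr m_ac)
  then have "(x \<oplus> y) \<otimes> (b \<otimes> d) = a \<otimes> d \<oplus> c \<otimes> b" using ab(5) cd(5) by simp
  then show "x \<oplus> y \<in> K" using ab cd A_props(5,6) A_mult_nz by (intro KI[of _ "a \<otimes> d \<oplus> c \<otimes> b" "b \<otimes> d"]) auto
qed

lemma K_subfield: "subfield K R"
proof -
  have sc: "subcring K R" by (rule subcringI'[OF K_subring])
  have Kc: "K \<subseteq> carrier R" using subringE(1)[OF K_subring] .
  have cr: "cring (R\<lparr>carrier := K\<rparr>)" using subcring_iff[OF Kc] sc by simp
  have "field (R\<lparr>carrier := K\<rparr>)"
    by (rule cring.cring_fieldI2[OF cr]) (use nz K_inv in auto)
  then show ?thesis using subfield_iff(1)[OF _ Kc] by simp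
qed

lemma carrier_K: "carrier R = K"
proof -
  interpret s: sf K R by (intro sf.intro is_cring K_subfield)
  have "carrier R \<subseteq> K"
  proof (rule s.epi_K)
    fix T :: "('a \<times> 'a) set ring" and g h
    assume T: "cring T" and g: "g \<in> ring_hom R T" and h: "h \<in> ring_hom R T" and gh: "\<forall>k\<in>K. g k = h k"
    have "\<forall>r\<in>carrier Q. g (\<phi> r) = h (\<phi> r)" using gh AK by auto
    then show "\<forall>s\<in>carrier R. g s = h s" using epi T g h unfolding ring_epi_def by blast
  qed
  then show ?thesis using subringE(1)[OF K_subring] by auto
qed

lemma field_R: "field R"
  by (rule cring_fieldI2) (use nz K_inv carrier_K in auto)

end

lemma FR_sub_gen: "frac_rel D \<subseteq> frac_pairs D \<times> frac_pairs D"
  unfolding frac_rel_def by auto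

context mc
begin

abbreviation "D \<equiv> R\<lparr>carrier := A\<rparr>"

lemma FP: "frac_pairs D = A \<times> (A - {\<zero>})" by (simp add: frac_pairs_def)

lemma FR: "((a, b), (c, d)) \<in> frac_rel D \<longleftrightarrow>
    (a, b) \<in> frac_pairs D \<and> (c, d) \<in> frac_pairs D \<and> a \<otimes> d = c \<otimes> b"
  by (simp add: frac_rel_def)

lemma FR_sub: "frac_rel D \<subseteq> frac_pairs D \<times> frac_pairs D"
  by (rule FR_sub_gen)

lemma trans_aux: assumes "a \<in> A" "b \<in> A" "c \<in> A" "d \<in> A" "e \<in> A" "f \<in> A" "d \<noteq> \<zero>"
  "a \<otimes> d = c \<otimes> b" "c \<otimes> f = e \<otimes> d" shows "a \<otimes> f = e \<otimes> b"
proof -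
  have c: "a \<in> carrier R" "b \<in> carrier R" "c \<in> carrier R" "d \<in> carrier R" "e \<in> carrier R" "f \<in> carrier R"
    using assms A_car by auto
  have du: "d \<in> Units R" using A_units assms by auto
  have "d \<otimes> (a \<otimes> f) = (a \<otimes> d) \<otimes> f" using c by (simp add: m_ac)
  also have "\<dots> = (c \<otimes> b) \<otimes> f" using assms(8) by simp
  also have "\<dots> = (c \<otimes> f) \<otimes> b" using c by (simp add: m_ac)
  also have "\<dots> = (e \<otimes> d) \<otimes> b" using assms(9) by simp
  also have "\<dots> = d \<otimes> (e \<otimes> b)" using c by (simp add: m_ac)
  finally show ?thesis using du c by simp
qed

lemma eqv: "equiv (frac_pairs D) (frac_rel D)"
  unfolding equiv_def
proof (intro conjI)
  show "frac_rel D \<subseteq> frac_pairs D \<times> frac_pairs D" by (rule FR_sub)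
  show "refl_on (frac_pairs D) (frac_rel D)" unfolding refl_on_def using FR_sub
    by (auto simp: FR)
  show "sym (frac_rel D)" unfolding sym_def by (auto simp: frac_rel_def)
  show "trans (frac_rel D)" unfolding trans_def
  proof (intro allI impI)
    fix x y z assume xy: "(x, y) \<in> frac_rel D" and yz: "(y, z) \<in> frac_rel D"
    obtain a b c d e f where xyz: "x = (a, b)" "y = (c, d)" "z = (e, f)" by (metis prod.exhaust)
    have h1: "(a, b) \<in> frac_pairs D" "(c, d) \<in> frac_pairs D" "a \<otimes> d = c \<otimes> b"
      using xy xyz FR by auto
    have h2: "(e, f) \<in> frac_pairs D" "c \<otimes> f = e \<otimes> d" using yz xyz FR by auto
    have "a \<otimes> f = e \<otimes> b" using h1 h2 FP by (intro trans_aux[of a b c d e f]) auto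
    then show "(x, z) \<in> frac_rel D" using xyz h1 h2 FR by auto
  qed
qed

lemma class_eq: "((a, b), (c, d)) \<in> frac_rel D \<Longrightarrow> frac_class D (a, b) = frac_class D (c, d)"
  using equiv_class_eq_iff[OF eqv] by (simp add: frac_class_def)

lemma in_class: "p \<in> frac_pairs D \<Longrightarrow> p \<in> frac_class D p"
  using equiv_class_self[OF eqv] by (simp add: frac_class_def)

lemma in_classE: assumes "q \<in> frac_class D (a, b)"
  obtains c d where "q = (c, d)" "((a, b), (c, d)) \<in> frac_rel D"
  using assms by (cases q) (auto simp: frac_class_def)

definition psi :: "('a \<times> 'a) set \<Rightarrow> 'a" where
  "psi U = (let p = (SOME p. p \<in> U) in fst p \<otimes> inv snd p)"

lemma pair_props: "(a, b) \<in> frac_pairs D \<Longrightarrow> a \<in> carrier R \<and> b \<in> Units R \<and> a \<in> A \<and> b \<in> A \<and> b \<noteq> \<zero>"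
  using FP A_units A_car by auto

lemma psi_class: assumes ab: "(a, b) \<in> frac_pairs D" shows "psi (frac_class D (a, b)) = a \<otimes> inv b"
proof -
  let ?U = "frac_class D (a, b)"
  have "(a, b) \<in> ?U" using in_class[OF ab] .
  then have "(SOME p. p \<in> ?U) \<in> ?U" by (rule someI)
  then obtain c d where cd: "(SOME p. p \<in> ?U) = (c, d)" "((a, b), (c, d)) \<in> frac_rel D"
    by (rule in_classE)
  have cdp: "(c, d) \<in> frac_pairs D" "a \<otimes> d = c \<otimes> b" using cd(2) FR by auto
  have "a \<otimes> inv b = c \<otimes> inv d"
    using pair_props[OF ab] pair_props[OF cdp(1)] cdp(2) by (intro div_eq) auto
  then show ?thesis unfolding psi_def Let_def cd(1) by simp
qed

lemma union_const: "(\<And>p q. p \<in> U \<Longrightarrow> q \<in> V \<Longrightarrow> f p q = C) \<Longrightarrow> u \<in> U \<Longrightarrow> v \<in> V \<Longrightarrow>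
  \<Union>{f p q | p q. p \<in> U \<and> q \<in> V} = C"
  by blast

lemma fmult: assumes ab: "(a, b) \<in> frac_pairs D" and cd: "(c, d) \<in> frac_pairs D"
  shows "frac_mult D (frac_class D (a, b)) (frac_class D (c, d)) = frac_class D (a \<otimes> c, b \<otimes> d)"
  unfolding frac_mult_def
proof (rule union_const[where f = "\<lambda>p q. frac_class D (fst p \<otimes>\<^bsub>D\<^esub> fst q, snd p \<otimes>\<^bsub>D\<^esub> snd q)", OF _ in_class[OF ab] in_class[OF cd]])
  fix p q assume p: "p \<in> frac_class D (a, b)" and q: "q \<in> frac_class D (c, d)"
  obtain p1 p2 where pp: "p = (p1, p2)" "((a, b), (p1, p2)) \<in> frac_rel D" using p by (rule in_classE)
  obtain q1 q2 where qq: "q = (q1, q2)" "((c, d), (q1, q2)) \<in> frac_rel D" using q by (rule in_classE)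
  have P: "(p1, p2) \<in> frac_pairs D" "a \<otimes> p2 = p1 \<otimes> b" using pp FR by auto
  have Q: "(q1, q2) \<in> frac_pairs D" "c \<otimes> q2 = q1 \<otimes> d" using qq FR by auto
  note pa = pair_props[OF ab] pair_props[OF cd] pair_props[OF P(1)] pair_props[OF Q(1)]
  have "(p1 \<otimes> q1) \<otimes> (b \<otimes> d) = (p1 \<otimes> b) \<otimes> (q1 \<otimes> d)" using pa by (simp add: m_ac Units_closed)
  also have "\<dots> = (a \<otimes> p2) \<otimes> (c \<otimes> q2)" using P(2) Q(2) by simp
  also have "\<dots> = (a \<otimes> c) \<otimes> (p2 \<otimes> q2)" using pa by (simp add: m_ac Units_closed)
  finally have e: "(p1 \<otimes> q1) \<otimes> (b \<otimes> d) = (a \<otimes> c) \<otimes> (p2 \<otimes> q2)" .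
  have pr1: "(p1 \<otimes> q1, p2 \<otimes> q2) \<in> frac_pairs D" using pa FP A_props(5) A_mult_nz by auto
  have pr2: "(a \<otimes> c, b \<otimes> d) \<in> frac_pairs D" using pa FP A_props(5) A_mult_nz by auto
  have "((p1 \<otimes> q1, p2 \<otimes> q2), (a \<otimes> c, b \<otimes> d)) \<in> frac_rel D" using pr1 pr2 e FR by auto
  then show "frac_class D (fst p \<otimes>\<^bsub>D\<^esub> fst q, snd p \<otimes>\<^bsub>D\<^esub> snd q) = frac_class D (a \<otimes> c, b \<otimes> d)"
    using class_eq pp qq by simp
qed

lemma fadd: assumes ab: "(a, b) \<in> frac_pairs D" and cd: "(c, d) \<in> frac_pairs D"
  shows "frac_add D (frac_class D (a, b)) (frac_class D (c, d)) = frac_class D (a \<otimes> d \<oplus> c \<otimes> b, b \<otimes> d)"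
  unfolding frac_add_def
proof (rule union_const[where f = "\<lambda>p q. frac_class D (fst p \<otimes>\<^bsub>D\<^esub> snd q \<oplus>\<^bsub>D\<^esub> fst q \<otimes>\<^bsub>D\<^esub> snd p, snd p \<otimes>\<^bsub>D\<^esub> snd q)", OF _ in_class[OF ab] in_class[OF cd]])
  fix p q assume p: "p \<in> frac_class D (a, b)" and q: "q \<in> frac_class D (c, d)"
  obtain p1 p2 where pp: "p = (p1, p2)" "((a, b), (p1, p2)) \<in> frac_rel D" using p by (rule in_classE)
  obtain q1 q2 where qq: "q = (q1, q2)" "((c, d), (q1, q2)) \<in> frac_rel D" using q by (rule in_classE)
  have P: "(p1, p2) \<in> frac_pairs D" "a \<otimes> p2 = p1 \<otimes> b" using pp FR by auto
  have Q: "(q1, q2) \<in> frac_pairs D" "c \<otimes> q2 = q1 \<otimes> d" using qq FR by auto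
  note pa = pair_props[OF ab] pair_props[OF cd] pair_props[OF P(1)] pair_props[OF Q(1)]
  have "(p1 \<otimes> q2 \<oplus> q1 \<otimes> p2) \<otimes> (b \<otimes> d) = (p1 \<otimes> b) \<otimes> (q2 \<otimes> d) \<oplus> (q1 \<otimes> d) \<otimes> (p2 \<otimes> b)"
    using pa by (simp add: m_ac l_distr r_distr Units_closed)
  also have "\<dots> = (a \<otimes> p2) \<otimes> (q2 \<otimes> d) \<oplus> (c \<otimes> q2) \<otimes> (p2 \<otimes> b)" using P(2) Q(2) by simp
  also have "\<dots> = (a \<otimes> d \<oplus> c \<otimes> b) \<otimes> (p2 \<otimes> q2)" using pa by (simp add: m_ac l_distr r_distr Units_closed)
  finally have e: "(p1 \<otimes> q2 \<oplus> q1 \<otimes> p2) \<otimes> (b \<otimes> d) = (a \<otimes> d \<oplus> c \<otimes> b) \<otimes> (p2 \<otimes> q2)" .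
  have pr1: "(p1 \<otimes> q2 \<oplus> q1 \<otimes> p2, p2 \<otimes> q2) \<in> frac_pairs D" using pa FP A_props(5,6) A_mult_nz by auto
  have pr2: "(a \<otimes> d \<oplus> c \<otimes> b, b \<otimes> d) \<in> frac_pairs D" using pa FP A_props(5,6) A_mult_nz by auto
  have "((p1 \<otimes> q2 \<oplus> q1 \<otimes> p2, p2 \<otimes> q2), (a \<otimes> d \<oplus> c \<otimes> b, b \<otimes> d)) \<in> frac_rel D" using pr1 pr2 e FR by auto
  then show "frac_class D (fst p \<otimes>\<^bsub>D\<^esub> snd q \<oplus>\<^bsub>D\<^esub> fst q \<otimes>\<^bsub>D\<^esub> snd p, snd p \<otimes>\<^bsub>D\<^esub> snd q) =
      frac_class D (a \<otimes> d \<oplus> c \<otimes> b, b \<otimes> d)"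
    using class_eq pp qq by simp
qed

lemma Frac_carrierE: assumes "U \<in> carrier (Frac D)"
  obtains a b where "(a, b) \<in> frac_pairs D" "U = frac_class D (a, b)"
  using assms unfolding Frac_def frac_class_def by (auto elim!: quotientE)

lemma Frac_mult: "U \<otimes>\<^bsub>Frac D\<^esub> V = frac_mult D U V" by (simp add: Frac_def)
lemma Frac_add: "U \<oplus>\<^bsub>Frac D\<^esub> V = frac_add D U V" by (simp add: Frac_def)
lemma Frac_one: "\<one>\<^bsub>Frac D\<^esub> = frac_class D (\<one>, \<one>)" by (simp add: Frac_def)

lemma psi_hom: "psi \<in> ring_hom (Frac D) R"
proof (rule ring_hom_memI)
  fix U assume "U \<in> carrier (Frac D)"
  then obtain a b where ab: "(a, b) \<in> frac_pairs D" "U = frac_class D (a, b)" by (rule Frac_carrierE)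
  have "psi U = a \<otimes> inv b" unfolding ab(2) by (rule psi_class[OF ab(1)])
  moreover have "a \<in> carrier R" "b \<in> Units R" using pair_props[OF ab(1)] by auto
  ultimately show "psi U \<in> carrier R" by simp
next
  fix U V
  assume UV: "U \<in> carrier (Frac D)" "V \<in> carrier (Frac D)"
  obtain a b where ab: "(a, b) \<in> frac_pairs D" "U = frac_class D (a, b)" using UV(1) by (rule Frac_carrierE)
  obtain c d where cd: "(c, d) \<in> frac_pairs D" "V = frac_class D (c, d)" using UV(2) by (rule Frac_carrierE)
  have pa: "a \<in> carrier R" "b \<in> Units R" "c \<in> carrier R" "d \<in> Units R" "a \<in> A" "b \<in> A" "c \<in> A" "d \<in> A"
    "b \<noteq> \<zero>" "d \<noteq> \<zero>"
    using pair_props[OF ab(1)] pair_props[OF cd(1)] by auto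
  have ic: "inv b \<in> carrier R" "inv d \<in> carrier R" "b \<in> carrier R" "d \<in> carrier R" using pa by auto
  have pr: "(a \<otimes> c, b \<otimes> d) \<in> frac_pairs D" using pa FP A_props(5) A_mult_nz by auto
  have bd: "b \<otimes> d \<in> Units R" using pa by auto
  have "(a \<otimes> inv b \<otimes> (c \<otimes> inv d)) \<otimes> (b \<otimes> d) = (a \<otimes> c) \<otimes> (inv b \<otimes> b) \<otimes> (inv d \<otimes> d)"
    using pa ic by (simp add: m_ac del: Units_l_inv Units_r_inv)
  also have "\<dots> = a \<otimes> c" using pa ic by simp
  finally have eq: "a \<otimes> inv b \<otimes> (c \<otimes> inv d) = (a \<otimes> c) \<otimes> inv (b \<otimes> d)"
    using div_char[OF bd] pa ic by auto
  have "psi (U \<otimes>\<^bsub>Frac D\<^esub> V) = psi (frac_class D (a \<otimes> c, b \<otimes> d))"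
    unfolding Frac_mult ab(2) cd(2) fmult[OF ab(1) cd(1)] ..
  also have "\<dots> = (a \<otimes> c) \<otimes> inv (b \<otimes> d)" by (rule psi_class[OF pr])
  also have "\<dots> = psi U \<otimes> psi V"
    unfolding ab(2) cd(2) psi_class[OF ab(1)] psi_class[OF cd(1)] eq ..
  finally show "psi (U \<otimes>\<^bsub>Frac D\<^esub> V) = psi U \<otimes> psi V" .
next
  fix U V
  assume UV: "U \<in> carrier (Frac D)" "V \<in> carrier (Frac D)"
  obtain a b where ab: "(a, b) \<in> frac_pairs D" "U = frac_class D (a, b)" using UV(1) by (rule Frac_carrierE)
  obtain c d where cd: "(c, d) \<in> frac_pairs D" "V = frac_class D (c, d)" using UV(2) by (rule Frac_carrierE)
  have pa: "a \<in> carrier R" "b \<in> Units R" "c \<in> carrier R" "d \<in> Units R" "a \<in> A" "b \<in> A" "c \<in> A" "d \<in> A"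
    "b \<noteq> \<zero>" "d \<noteq> \<zero>"
    using pair_props[OF ab(1)] pair_props[OF cd(1)] by auto
  have ic: "inv b \<in> carrier R" "inv d \<in> carrier R" "b \<in> carrier R" "d \<in> carrier R" using pa by auto
  have pr: "(a \<otimes> d \<oplus> c \<otimes> b, b \<otimes> d) \<in> frac_pairs D" using pa FP A_props(5,6) A_mult_nz by auto
  have bd: "b \<otimes> d \<in> Units R" using pa by auto
  have e1: "(a \<otimes> inv b \<oplus> c \<otimes> inv d) \<otimes> (b \<otimes> d) =
        (a \<otimes> inv b) \<otimes> (b \<otimes> d) \<oplus> (c \<otimes> inv d) \<otimes> (b \<otimes> d)"
    using pa ic by (simp add: l_distr)
  have e2: "(a \<otimes> inv b) \<otimes> (b \<otimes> d) = a \<otimes> d \<otimes> (inv b \<otimes> b)"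
    using pa ic by (simp add: m_ac del: Units_l_inv Units_r_inv)
  have e3: "(c \<otimes> inv d) \<otimes> (b \<otimes> d) = c \<otimes> b \<otimes> (inv d \<otimes> d)"
    using pa ic by (simp add: m_ac del: Units_l_inv Units_r_inv)
  have "(a \<otimes> inv b \<oplus> c \<otimes> inv d) \<otimes> (b \<otimes> d) = a \<otimes> d \<oplus> c \<otimes> b"
    unfolding e1 e2 e3 using pa ic by simp
  then have eq: "a \<otimes> inv b \<oplus> c \<otimes> inv d = (a \<otimes> d \<oplus> c \<otimes> b) \<otimes> inv (b \<otimes> d)"
    using div_char[OF bd] pa ic by auto
  have "psi (U \<oplus>\<^bsub>Frac D\<^esub> V) = psi (frac_class D (a \<otimes> d \<oplus> c \<otimes> b, b \<otimes> d))"
    unfolding Frac_add ab(2) cd(2) fadd[OF ab(1) cd(1)] ..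
  also have "\<dots> = (a \<otimes> d \<oplus> c \<otimes> b) \<otimes> inv (b \<otimes> d)" by (rule psi_class[OF pr])
  also have "\<dots> = psi U \<oplus> psi V"
    unfolding ab(2) cd(2) psi_class[OF ab(1)] psi_class[OF cd(1)] eq ..
  finally show "psi (U \<oplus>\<^bsub>Frac D\<^esub> V) = psi U \<oplus> psi V" .
next
  have p: "(\<one>, \<one>) \<in> frac_pairs D" using FP A_props(3) nz by auto
  have "psi (frac_class D (\<one>, \<one>)) = \<one> \<otimes> inv \<one>" by (rule psi_class[OF p])
  then show "psi \<one>\<^bsub>Frac D\<^esub> = \<one>" unfolding Frac_one by simp
qed

lemma psi_bij: "bij_betw psi (carrier (Frac D)) (carrier R)"
  unfolding bij_betw_def
proof
  show "inj_on psi (carrier (Frac D))"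
  proof (rule inj_onI)
    fix U V assume U: "U \<in> carrier (Frac D)" and V: "V \<in> carrier (Frac D)" and e: "psi U = psi V"
    obtain a b where ab: "(a, b) \<in> frac_pairs D" "U = frac_class D (a, b)" using U by (rule Frac_carrierE)
    obtain c d where cd: "(c, d) \<in> frac_pairs D" "V = frac_class D (c, d)" using V by (rule Frac_carrierE)
    note pa = pair_props[OF ab(1)] pair_props[OF cd(1)]
    have e': "a \<otimes> inv b = c \<otimes> inv d"
      using e unfolding ab(2) cd(2) psi_class[OF ab(1)] psi_class[OF cd(1)] .
    have bu: "b \<in> Units R" "d \<in> Units R" "a \<in> carrier R" "c \<in> carrier R" using pa by auto
    have "a \<otimes> d = c \<otimes> b" by (rule div_eq_rev[OF bu e'])
    then have "((a, b), (c, d)) \<in> frac_rel D" unfolding FR using ab(1) cd(1) by blast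
    then show "U = V" unfolding ab(2) cd(2) by (rule class_eq)
  qed
  show "psi ` carrier (Frac D) = carrier R"
  proof
    show "psi ` carrier (Frac D) \<subseteq> carrier R"
    proof
      fix y assume "y \<in> psi ` carrier (Frac D)"
      then obtain U where U: "U \<in> carrier (Frac D)" "y = psi U" by blast
      show "y \<in> carrier R" unfolding U(2) by (rule ring_hom_closed[OF psi_hom U(1)])
    qed
    show "carrier R \<subseteq> psi ` carrier (Frac D)"
    proof
      fix y assume y: "y \<in> carrier R"
      then have "y \<in> K" using carrier_K by simp
      then obtain a b where ab: "y \<in> carrier R" "a \<in> A" "b \<in> A" "b \<noteq> \<zero>" "y \<otimes> b = a" by (rule KE)
      have p: "(a, b) \<in> frac_pairs D" using ab FP by auto
      have bu: "b \<in> Units R" using pair_props[OF p] by blast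
      have "y = a \<otimes> inv b" by (rule div_char[OF bu ab(1) ab(5)])
      then have "y = psi (frac_class D (a, b))" unfolding psi_class[OF p] .
      moreover have "frac_class D (a, b) \<in> carrier (Frac D)"
        unfolding frac_class_def Frac_def using p by (simp only: ring.simps partial_object.simps quotientI)
      ultimately show "y \<in> psi ` carrier (Frac D)" by blast
    qed
  qed
qed

lemma final: "domain (R\<lparr>carrier := \<phi> ` carrier Q\<rparr>)
    \<and> (\<exists>\<psi>. \<psi> \<in> ring_iso (Frac (R\<lparr>carrier := \<phi> ` carrier Q\<rparr>)) R
           \<and> (\<forall>a \<in> \<phi> ` carrier Q.
                \<psi> (frac_class (R\<lparr>carrier := \<phi> ` carrier Q\<rparr>) (a, \<one>)) = a))
    \<and> field R"
proof (intro conjI exI)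
  show "domain D" by (rule domainA)
  show "field R" by (rule field_R)
  show "psi \<in> ring_iso (Frac D) R" unfolding ring_iso_def using psi_hom psi_bij by blast
  show "\<forall>a \<in> A. psi (frac_class D (a, \<one>)) = a"
  proof
    fix a assume a: "a \<in> A"
    have "(a, \<one>) \<in> frac_pairs D" using a FP A_props(3) nz by auto
    then have "psi (frac_class D (a, \<one>)) = a \<otimes> inv \<one>" by (rule psi_class)
    then show "psi (frac_class D (a, \<one>)) = a" using A_car[OF a] by simp
  qed
qed

end

theorem lemma3p6:
  fixes R :: "('a, 'm) ring_scheme" and S :: "('b, 'n) ring_scheme" and \<phi> :: "'a \<Rightarrow> 'b"
  assumes "cring R" and "cring S"
    and "ring_epi R S \<phi>"
    and "\<one>\<^bsub>S\<^esub> \<noteq> \<zero>\<^bsub>S\<^esub>"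
    and "\<forall>e \<in> carrier S. e \<otimes>\<^bsub>S\<^esub> e = e \<longrightarrow> e = \<zero>\<^bsub>S\<^esub> \<or> e = \<one>\<^bsub>S\<^esub>"
    and "\<forall>r \<in> carrier R. \<exists>b. pointwise_inverse S (\<phi> r) b"
  shows "domain (S\<lparr>carrier := \<phi> ` carrier R\<rparr>)
    \<and> (\<exists>\<psi>. \<psi> \<in> ring_iso (Frac (S\<lparr>carrier := \<phi> ` carrier R\<rparr>)) S
           \<and> (\<forall>a \<in> \<phi> ` carrier R.
                \<psi> (frac_class (S\<lparr>carrier := \<phi> ` carrier R\<rparr>) (a, \<one>\<^bsub>S\<^esub>)) = a))
    \<and> field S"
proof -
  interpret m: mc S R \<phi> by (intro mc.intro mc_axioms.intro assms)
  show ?thesis by (rule m.final)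
qed

end
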